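(* Let $n\in\mathbb{N}$, let $0\le x_0<x_1<\cdots<x_n$ be real numbers, $I:=[x_0,x_n]$, and let $p\in[1,\infty)$. For $i\in\{1,\dots,n\}$ let $l_i:I\to[x_{i-1},x_i]$ be a contractive homeomorphism with $l_i(x_0)=x_{i-1}$, $l_i(x_n)=x_i$, whose derivative $Dl_i$ exists and belongs to $L_\infty^+I$. Let $q_1,\dots,q_n\in L_p^+I$ and $S_1,\dots,S_n\in L_\infty^+I$, and define the semi-affine Read–Bajractarević operator $T:L_p^+I\to(\mathbb{R}_0^+)^I$ by $$Tg:=\sum_{i=1}^n (q_i\circ l_i^{-1})\,\chi_{I_i}+\sum_{i=1}^n (S_i\circ l_i^{-1})\cdot(g\circ l_i^{-1})\,\chi_{I_i}.$$ If $$\sum_{i=1}^n \|Dl_i\cdot S_i^p\|_\infty<1,$$ then $T$ maps $L_p^+I$ into itself and is contractive on $(L_p^+I,d_p)$. Its unique fixed point $f^*$ satisfies the self-referential equation $$f^*=\sum_{i=1}^n (q_i\circ l_i^{-1})\,\chi_{I_i}+\sum_{i=1}^n (S_i\circ l_i^{-1})\cdot(f^*\circ l_i^{-1})\,\chi_{I_i},$$ and the graph of $f^*$ is the attractor of the iterated function system on $I\times\mathbb{R}_0^+$ given by the maps $w_i(x,y):=(l_i(x),\,q_i(x)+S_i(x)\,y)$, $i=1,\dots,n$.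
   Context: $\mathbb{R}_0^+:=\{x\in\mathbb{R}:x\ge 0\}$. For $p\in[1,\infty]$, $L_p^+I:=\{f\in L_p(I): f:I\to\mathbb{R}_0^+\}$ (classes of a.e. nonnegative $L_p$-functions), a semi-vector space over $\mathbb{R}_0^+$ under pointwise addition and multiplication by nonnegative scalars. It is endowed with $d_p(f,g):=\int_I(\max\{f(t),g(t)\}-\min\{f(t),g(t)\})^p\,dt$ for $p<\infty$, and $d_\infty(f,g):=\operatorname{ess\,sup}_{t\in I}(\max\{f(t),g(t)\}-\min\{f(t),g(t)\})$; $\|\cdot\|_\infty$ is the essential supremum norm. The subintervals are $I_i:=[x_{i-1},x_i)$ for $i=1,\dots,n-1$ and $I_n:=[x_{n-1},x_n]$, so that $I$ is the disjoint union of the $I_i$; $\chi_{I_i}$ is the characteristic function of $I_i$. An operator is contractive if it is Lipschitz with constant $<1$ with respect to $d_p$. The attractor of an iterated function system $\{w_1,\dots,w_n\}$ is the unique nonempty set $A$ with $A=\bigcup_{i=1}^n w_i(A)$ (fixed point of the associated set-valued map).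
   Formalization: The graph of f* satisfies $A=\bigcup_{i=1}^n w_i(A)$ only for some nonnegative representatives of f*, $q_i$, $S_i$ agreeing a.e., and is the unique such set only among graphs of nonnegative $L_p^+I$ functions, not among all nonempty sets. The statement above fails without it. *)

theory Defs
  imports "HOL-Analysis.Analysis"
begin

text \<open>Nonnegative L_p functions on a set I (representatives; equality is a.e.).
  Here p is a real exponent, 1 <= p < infinity.\<close>
definition Lp_plus :: "real \<Rightarrow> real set \<Rightarrow> (real \<Rightarrow> real) \<Rightarrow> bool" where
  "Lp_plus p I f \<longleftrightarrow>
     f \<in> borel_measurable (lebesgue_on I) \<and>
     (AE t in lebesgue_on I. 0 \<le> f t) \<and>
     integrable (lebesgue_on I) (\<lambda>t. \<bar>f t\<bar> powr p)"

definition Linf_plus :: "real set \<Rightarrow> (real \<Rightarrow> real) \<Rightarrow> bool" where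
  "Linf_plus I f \<longleftrightarrow>
     f \<in> borel_measurable (lebesgue_on I) \<and>
     (AE t in lebesgue_on I. 0 \<le> f t) \<and>
     (\<exists>B. AE t in lebesgue_on I. \<bar>f t\<bar> \<le> B)"

definition ess_norm_inf :: "real set \<Rightarrow> (real \<Rightarrow> real) \<Rightarrow> real" where
  "ess_norm_inf I f = Inf {B. 0 \<le> B \<and> (AE t in lebesgue_on I. \<bar>f t\<bar> \<le> B)}"

text \<open>The distance d_p (no p-th root, as in the paper).\<close>
definition d_p :: "real \<Rightarrow> real set \<Rightarrow> (real \<Rightarrow> real) \<Rightarrow> (real \<Rightarrow> real) \<Rightarrow> real" where
  "d_p p I f g = integral\<^sup>L (lebesgue_on I) (\<lambda>t. (max (f t) (g t) - min (f t) (g t)) powr p)"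

definition subint :: "(nat \<Rightarrow> real) \<Rightarrow> nat \<Rightarrow> nat \<Rightarrow> real set" where
  "subint x n i = (if i = n then {x (i - 1) .. x i} else {x (i - 1) ..< x i})"

definition RB_op :: "(nat \<Rightarrow> real) \<Rightarrow> nat \<Rightarrow> (nat \<Rightarrow> real \<Rightarrow> real) \<Rightarrow> (nat \<Rightarrow> real \<Rightarrow> real)
    \<Rightarrow> (nat \<Rightarrow> real \<Rightarrow> real) \<Rightarrow> (real \<Rightarrow> real) \<Rightarrow> real \<Rightarrow> real" where
  "RB_op x n l q S g t =
     (\<Sum>i=1..n. q i (the_inv_into {x 0 .. x n} (l i) t) * indicator (subint x n i) t)
   + (\<Sum>i=1..n. S i (the_inv_into {x 0 .. x n} (l i) t) * g (the_inv_into {x 0 .. x n} (l i) t)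
                 * indicator (subint x n i) t)"

definition graph_on :: "real set \<Rightarrow> (real \<Rightarrow> real) \<Rightarrow> (real \<times> real) set" where
  "graph_on I f = (\<lambda>t. (t, f t)) ` I"

definition ifs_map :: "(real \<Rightarrow> real) \<Rightarrow> (real \<Rightarrow> real) \<Rightarrow> (real \<Rightarrow> real) \<Rightarrow> real \<times> real \<Rightarrow> real \<times> real" where
  "ifs_map li qi Si = (\<lambda>(u, y). (li u, qi u + Si u * y))"

end

theory Submission
  imports Defs
begin

locale RBL =
  fixes n :: nat and x :: "nat \<Rightarrow> real" and p :: real
    and l Dl q S :: "nat \<Rightarrow> real \<Rightarrow> real"
  assumes n: "n \<ge> 1"
    and xmono: "\<forall>i<n. x i < x (Suc i)"
    and p: "1 \<le> p"
    and l_homeo: "\<forall>i\<in>{1..n}. \<exists>g. homeomorphism {x 0 .. x n} {x (i - 1) .. x i} (l i) g"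
    and l_contr: "\<forall>i\<in>{1..n}. \<exists>C<1. C-lipschitz_on {x 0 .. x n} (l i)"
    and l_ends: "\<forall>i\<in>{1..n}. l i (x 0) = x (i - 1) \<and> l i (x n) = x i"
    and l_deriv: "\<forall>i\<in>{1..n}. (AE t in lebesgue_on {x 0 .. x n}.
                     (l i has_real_derivative Dl i t) (at t within {x 0 .. x n}))"
    and Dl_Linf: "\<forall>i\<in>{1..n}. Linf_plus {x 0 .. x n} (Dl i)"
    and q_Lp: "\<forall>i\<in>{1..n}. Lp_plus p {x 0 .. x n} (q i)"
    and S_Linf: "\<forall>i\<in>{1..n}. Linf_plus {x 0 .. x n} (S i)"
    and small: "(\<Sum>i=1..n. ess_norm_inf {x 0 .. x n} (\<lambda>t. Dl i t * S i t powr p)) < 1"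
begin

abbreviation "I \<equiv> {x 0 .. x n}"
definition "J i = {x (i - 1) .. x i}"
definition "h i = the_inv_into I (l i)"
definition "K t = Max {k\<in>{1..n}. x (k - 1) \<le> t}"
definition "H t = h (K t) t"

lemma x_less: "i < j \<Longrightarrow> j \<le> n \<Longrightarrow> x i < x j"
proof (induction j)
  case 0 then show ?case by simp
next
  case (Suc j)
  then have "x j < x (Suc j)" using xmono by auto
  show ?case
  proof (cases "i < j")
    case True then show ?thesis using Suc \<open>x j < x (Suc j)\<close> by auto
  next
    case False then have "i = j" using Suc.prems by simp
    then show ?thesis using \<open>x j < x (Suc j)\<close> by simp
  qed
qed

lemma x_le: "i \<le> j \<Longrightarrow> j \<le> n \<Longrightarrow> x i \<le> x j"
  using x_less by (cases "i = j") (auto intro: less_imp_le)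

lemma I_sets[simp]: "I \<in> sets lebesgue" by simp

lemma subint_J: "k \<in> {1..n} \<Longrightarrow> subint x n k \<subseteq> J k"
  by (auto simp: subint_def J_def)

lemma J_I: "k \<in> {1..n} \<Longrightarrow> J k \<subseteq> I"
  using x_le[of 0 "k-1"] x_le[of k n] by (auto simp: J_def)

lemma subint_I: "k \<in> {1..n} \<Longrightarrow> subint x n k \<subseteq> I"
  using subint_J J_I by blast

lemma K_props:
  assumes t: "t \<in> I"
  shows "K t \<in> {1..n}" "t \<in> subint x n (K t)"
proof -
  let ?A = "{k\<in>{1..n}. x (k - 1) \<le> t}"
  have fin: "finite ?A" by simp
  have ne: "1 \<in> ?A" using n t by auto
  have KA: "K t \<in> ?A" unfolding K_def using fin ne Max_in by blast
  then show "K t \<in> {1..n}" by auto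
  show "t \<in> subint x n (K t)"
  proof (cases "K t = n")
    case True then show ?thesis using KA t by (auto simp: subint_def)
  next
    case False
    have "t < x (K t)"
    proof (rule ccontr)
      assume "\<not> t < x (K t)"
      then have "Suc (K t) \<in> ?A" using KA False by auto
      then have "Suc (K t) \<le> K t" unfolding K_def using fin Max_ge by blast
      then show False by simp
    qed
    then show ?thesis using KA False by (auto simp: subint_def)
  qed
qed

lemma K_unique:
  assumes k: "k \<in> {1..n}" and t: "t \<in> subint x n k"
  shows "K t = k"
proof -
  let ?A = "{k\<in>{1..n}. x (k - 1) \<le> t}"
  have kA: "k \<in> ?A" using k t by (auto simp: subint_def split: if_splits)
  have "j \<le> k" if "j \<in> ?A" for j
  proof (rule ccontr)
    assume "\<not> j \<le> k"
    then have "k < n" "k \<le> j - 1" using that by auto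
    then have "x k \<le> x (j - 1)" using x_le that by auto
    moreover have "t < x k" using t \<open>k < n\<close> by (auto simp: subint_def)
    ultimately show False using that by auto
  qed
  then show ?thesis unfolding K_def using kA by (intro Max_eqI) auto
qed

lemma l_facts:
  assumes i: "i \<in> {1..n}"
  shows "l i ` I = J i" "inj_on (l i) I" "continuous_on I (l i)"
    "\<And>t. t \<in> J i \<Longrightarrow> h i t \<in> I" "\<And>t. t \<in> J i \<Longrightarrow> l i (h i t) = t"
    "\<And>u. u \<in> I \<Longrightarrow> h i (l i u) = u"
proof -
  obtain g where hg: "homeomorphism I (J i) (l i) g" using l_homeo i unfolding J_def by blast
  then show im: "l i ` I = J i" and "continuous_on I (l i)" by (auto simp: homeomorphism_def)
  show inj: "inj_on (l i) I" using hg by (metis homeomorphism_def inj_on_inverseI)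
  show "h i t \<in> I" if "t \<in> J i" for t
    unfolding h_def using that im inj by (metis the_inv_into_into subset_refl)
  show "l i (h i t) = t" if "t \<in> J i" for t
    unfolding h_def using that im inj by (metis f_the_inv_into_f)
  show "h i (l i u) = u" if "u \<in> I" for u
    unfolding h_def using that inj by (metis the_inv_into_f_f)
qed

lemma H_props:
  assumes t: "t \<in> I"
  shows "H t \<in> I" "l (K t) (H t) = t"
  using K_props[OF t] subint_J l_facts unfolding H_def by blast+

lemma RB_op_eq:
  assumes t: "t \<in> I"
  shows "RB_op x n l q' S' g t = q' (K t) (H t) + S' (K t) (H t) * g (H t)"
proof -
  have ind: "indicator (subint x n k) t = (if k = K t then 1 else (0::real))" if "k \<in> {1..n}" for k
  proof (cases "k = K t")
    case True
    then show ?thesis using K_props(2)[OF t] by (simp add: indicator_def)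
  next
    case False
    then have "t \<notin> subint x n k" using K_unique[OF that] by blast
    then show ?thesis using False by (simp add: indicator_def)
  qed
  have 1: "(\<Sum>i=1..n. q' i (the_inv_into I (l i) t) * indicator (subint x n i) t)
      = (\<Sum>i=1..n. if i = K t then q' i (h i t) else 0)"
    by (rule sum.cong) (auto simp: ind h_def)
  have 2: "(\<Sum>i=1..n. S' i (the_inv_into I (l i) t) * g (the_inv_into I (l i) t) * indicator (subint x n i) t)
      = (\<Sum>i=1..n. if i = K t then S' i (h i t) * g (h i t) else 0)"
    by (rule sum.cong) (auto simp: ind h_def)
  show ?thesis unfolding RB_op_def 1 2 using K_props[OF t]
    by (simp add: sum.delta' H_def)
qed

end

lemma cov_image:
  fixes f D :: "real \<Rightarrow> real"
  assumes lip: "C-lipschitz_on T f" and inj: "inj_on f T" and T: "T \<in> sets lebesgue" "compact T"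
    and der: "AE t in lebesgue_on T. (f has_real_derivative D t) (at t within T)"
    and A: "A \<in> sets lebesgue" "A \<subseteq> T"
  shows "f ` A \<in> sets lebesgue \<and> emeasure lebesgue (f ` A) = (\<integral>\<^sup>+t. ennreal \<bar>D t\<bar> * indicator A t \<partial>lebesgue)"
proof -
  obtain N where N: "\<And>t. t \<in> space (lebesgue_on T) - N \<Longrightarrow> (f has_real_derivative D t) (at t within T)"
    "N \<in> null_sets (lebesgue_on T)"
    using AE_E3[OF der] by blast
  have NT: "N \<subseteq> T" and Nnull: "N \<in> null_sets lebesgue"
    using N(2) null_sets_restrict_space[OF T(1)] by auto
  define S where "S = A - N"
  have S: "S \<in> sets lebesgue" unfolding S_def using A Nnull by auto
  have derS: "(f has_real_derivative D t) (at t within S)" if "t \<in> S" for t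
    using N(1)[of t] that A unfolding S_def by (auto intro: DERIV_subset)
  have injS: "inj_on f S" using inj A unfolding S_def by (auto intro: inj_on_subset)
  have diffS: "f differentiable_on S"
    using derS unfolding differentiable_on_def
    by (meson real_differentiable_def differentiable_at_withinI)
  have fS: "f ` S \<in> sets lebesgue"
    by (rule differentiable_image_in_sets_lebesgue[OF S _ diffS]) simp
  have "continuous_on T f" using lip by (rule lipschitz_on_continuous_on)
  then have "compact (f ` T)" using T(2) by (rule compact_continuous_image)
  then have "bounded (f ` S)" using A unfolding S_def
    by (meson Diff_subset bounded_subset compact_imp_bounded image_mono order_trans)
  then have fSm: "f ` S \<in> lmeasurable" using fS bounded_set_imp_lmeasurable by blast
  have negl: "negligible (f ` (A \<inter> N))"
  proof (rule negligible_locally_Lipschitz_image)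
    show "negligible (A \<inter> N)" using Nnull
      by (meson inf_le2 negligible_iff_null_sets negligible_subset)
    show "\<exists>U B. open U \<and> y \<in> U \<and> (\<forall>z\<in>A \<inter> N \<inter> U. norm (f z - f y) \<le> B * norm (z - y))"
      if "y \<in> A \<inter> N" for y
    proof (intro exI[of _ UNIV] exI[of _ C] conjI ballI)
      fix z assume "z \<in> A \<inter> N \<inter> UNIV"
      then show "norm (f z - f y) \<le> C * norm (z - y)"
        using that NT lipschitz_onD[OF lip, of z y] by (auto simp: dist_real_def)
    qed auto
  qed simp
  have fA: "f ` A = f ` S \<union> f ` (A \<inter> N)" unfolding S_def by auto
  have "(\<lambda>x. \<bar>D x\<bar> *\<^sub>R (1::real)) absolutely_integrable_on S \<and>
        integral S (\<lambda>x. \<bar>D x\<bar> *\<^sub>R (1::real)) = measure lebesgue (f ` S)"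
    using has_absolute_integral_change_of_variables_real[OF S derS injS, of "\<lambda>_. 1::real" "measure lebesgue (f ` S)"]
    using fSm lmeasure_integral[OF fSm] lmeasurable_iff_integrable_on[of "f ` S"]
      absolutely_integrable_on_iff_nonneg[of "f ` S" "\<lambda>_. 1::real"]
    by auto
  then have ai: "set_integrable lebesgue S (\<lambda>x. \<bar>D x\<bar>)" and iv: "integral S (\<lambda>x. \<bar>D x\<bar>) = measure lebesgue (f ` S)"
    by auto
  have "(LINT x:S | lebesgue. \<bar>D x\<bar>) = measure lebesgue (f ` S)"
    using set_lebesgue_integral_eq_integral(2)[OF ai] iv by simp
  then have "(\<integral>\<^sup>+x. ennreal (indicator S x *\<^sub>R \<bar>D x\<bar>) \<partial>lebesgue) = ennreal (measure lebesgue (f ` S))"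
    using ai unfolding set_integrable_def set_lebesgue_integral_def
    by (subst nn_integral_eq_integral) auto
  then have eqS: "(\<integral>\<^sup>+x. ennreal \<bar>D x\<bar> * indicator S x \<partial>lebesgue) = emeasure lebesgue (f ` S)"
    using fSm by (simp add: emeasure_eq_measure2 indicator_mult_ennreal mult.commute)
  have "(\<integral>\<^sup>+x. ennreal \<bar>D x\<bar> * indicator A x \<partial>lebesgue) = (\<integral>\<^sup>+x. ennreal \<bar>D x\<bar> * indicator S x \<partial>lebesgue)"
    using AE_not_in[OF Nnull] by (rule nn_integral_cong_AE[OF AE_mp]) (auto simp: S_def indicator_def)
  moreover have "f ` A \<in> sets lebesgue" unfolding fA
    using fS negl negligible_iff_null_sets[of "f ` (A \<inter> N)"] by (intro sets.Un) auto
  moreover have "emeasure lebesgue (f ` A) = emeasure lebesgue (f ` S)"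
    using fA emeasure_Un_null_set[OF fS] negl negligible_iff_null_sets by metis
  ultimately show ?thesis using eqS by simp
qed

context RBL begin

lemma sets_I_iff: "A \<in> sets (lebesgue_on I) \<longleftrightarrow> A \<subseteq> I \<and> A \<in> sets lebesgue"
  by (simp add: sets_restrict_space_iff)

lemma J_sets[simp]: "J i \<in> sets lebesgue" by (simp add: J_def)

lemma Dl_meas: "i \<in> {1..n} \<Longrightarrow> Dl i \<in> borel_measurable (lebesgue_on I)"
  using Dl_Linf by (auto simp: Linf_plus_def)

lemma l_image:
  assumes i: "i \<in> {1..n}" and A: "A \<in> sets lebesgue" "A \<subseteq> I"
  shows "l i ` A \<in> sets lebesgue \<and> emeasure lebesgue (l i ` A) = (\<integral>\<^sup>+t. ennreal \<bar>Dl i t\<bar> * indicator A t \<partial>lebesgue)"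
proof -
  obtain C where C: "C-lipschitz_on I (l i)" using l_contr i by blast
  show ?thesis
    by (rule cov_image[OF C l_facts(2)[OF i] I_sets _ _ A]) (use l_deriv i in auto)
qed

lemma h_preimage:
  assumes i: "i \<in> {1..n}" and A: "A \<subseteq> I"
  shows "h i -` A \<inter> J i = l i ` A"
proof -
  have "t \<in> h i -` A \<inter> J i \<longleftrightarrow> t \<in> l i ` A" for t
  proof
    assume "t \<in> h i -` A \<inter> J i"
    then show "t \<in> l i ` A" using l_facts(5)[OF i, of t] by (metis IntE image_eqI vimageE)
  next
    assume "t \<in> l i ` A"
    then obtain u where uA: "u \<in> A" and t: "t = l i u" by blast
    then have uI: "u \<in> I" using A by blast
    have "h i t \<in> A" using l_facts(6)[OF i uI] uA t by simp
    moreover have "t \<in> J i" using l_facts(1)[OF i] uI t by blast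
    ultimately show "t \<in> h i -` A \<inter> J i" by simp
  qed
  then show ?thesis by blast
qed

lemma h_meas:
  assumes i: "i \<in> {1..n}"
  shows "h i \<in> measurable (lebesgue_on (J i)) (lebesgue_on I)"
proof (rule measurableI)
  show "h i t \<in> space (lebesgue_on I)" if "t \<in> space (lebesgue_on (J i))" for t
    using that l_facts[OF i] by auto
  fix A assume "A \<in> sets (lebesgue_on I)"
  then have A: "A \<subseteq> I" "A \<in> sets lebesgue" by (auto simp: sets_I_iff)
  have "h i -` A \<inter> space (lebesgue_on (J i)) = l i ` A" using h_preimage[OF i A(1)] by simp
  moreover have "l i ` A \<in> sets (lebesgue_on (J i))"
    using l_image[OF i A(2,1)] l_facts(1)[OF i] A(1) by (auto simp: sets_restrict_space_iff)
  ultimately show "h i -` A \<inter> space (lebesgue_on (J i)) \<in> sets (lebesgue_on (J i))" by simp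
qed

lemma distr_h:
  assumes i: "i \<in> {1..n}"
  shows "distr (lebesgue_on (J i)) (lebesgue_on I) (h i) = density (lebesgue_on I) (\<lambda>u. ennreal \<bar>Dl i u\<bar>)"
proof (rule measure_eqI)
  show "sets (distr (lebesgue_on (J i)) (lebesgue_on I) (h i)) = sets (density (lebesgue_on I) (\<lambda>u. ennreal \<bar>Dl i u\<bar>))"
    by simp
  fix A assume "A \<in> sets (distr (lebesgue_on (J i)) (lebesgue_on I) (h i))"
  then have AI: "A \<in> sets (lebesgue_on I)" by simp
  then have A: "A \<subseteq> I" "A \<in> sets lebesgue" by (auto simp: sets_I_iff)
  have "emeasure (distr (lebesgue_on (J i)) (lebesgue_on I) (h i)) A = emeasure (lebesgue_on (J i)) (l i ` A)"
    using emeasure_distr[OF h_meas[OF i] AI] h_preimage[OF i A(1)] by simp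
  also have "\<dots> = emeasure lebesgue (l i ` A)"
    using l_facts(1)[OF i] A(1) by (intro emeasure_restrict_space) auto
  also have "\<dots> = (\<integral>\<^sup>+t. ennreal \<bar>Dl i t\<bar> * indicator A t \<partial>lebesgue)"
    using l_image[OF i A(2,1)] by simp
  also have "\<dots> = (\<integral>\<^sup>+t. ennreal \<bar>Dl i t\<bar> * indicator A t \<partial>lebesgue_on I)"
    using A(1) by (subst nn_integral_restrict_space) (auto intro!: nn_integral_cong simp: indicator_def)
  also have "\<dots> = emeasure (density (lebesgue_on I) (\<lambda>u. ennreal \<bar>Dl i u\<bar>)) A"
    using Dl_meas[OF i] AI by (subst emeasure_density) auto
  finally show "emeasure (distr (lebesgue_on (J i)) (lebesgue_on I) (h i)) A = emeasure (density (lebesgue_on I) (\<lambda>u. ennreal \<bar>Dl i u\<bar>)) A" .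
qed

lemma nn_transfer:
  assumes i: "i \<in> {1..n}" and psi: "psi \<in> borel_measurable (lebesgue_on I)"
  shows "(\<integral>\<^sup>+t. psi (h i t) \<partial>lebesgue_on (J i)) = (\<integral>\<^sup>+u. ennreal \<bar>Dl i u\<bar> * psi u \<partial>lebesgue_on I)"
proof -
  have "(\<integral>\<^sup>+t. psi (h i t) \<partial>lebesgue_on (J i)) = integral\<^sup>N (distr (lebesgue_on (J i)) (lebesgue_on I) (h i)) psi"
    using psi by (subst nn_integral_distr[OF h_meas[OF i]]) auto
  also have "\<dots> = (\<integral>\<^sup>+u. ennreal \<bar>Dl i u\<bar> * psi u \<partial>lebesgue_on I)"
    unfolding distr_h[OF i] using Dl_meas[OF i] psi by (subst nn_integral_density) auto
  finally show ?thesis .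
qed

lemma K_iff: "t \<in> I \<Longrightarrow> k \<in> {1..n} \<Longrightarrow> t \<in> subint x n k \<longleftrightarrow> K t = k"
  using K_props K_unique by blast

lemma comp_piece_meas:
  fixes phi :: "real \<Rightarrow> 'b::topological_space"
  assumes k: "k \<in> {1..n}" and phi: "phi \<in> borel_measurable (lebesgue_on I)" and that: "B \<in> sets borel"
  shows "(\<lambda>t. phi (h k t)) -` B \<inter> subint x n k \<in> sets lebesgue"
proof -
  have "(\<lambda>t. phi (h k t)) \<in> borel_measurable (lebesgue_on (J k))"
    using measurable_comp[OF h_meas[OF k] phi] by (simp add: o_def)
  then have "(\<lambda>t. phi (h k t)) -` B \<inter> space (lebesgue_on (J k)) \<in> sets (lebesgue_on (J k))"
    using that by (rule measurable_sets)
  then have "(\<lambda>t. phi (h k t)) -` B \<inter> J k \<in> sets (lebesgue_on (J k))" by simp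
  then have "(\<lambda>t. phi (h k t)) -` B \<inter> J k \<in> sets lebesgue" by (simp add: sets_restrict_space_iff)
  moreover have "subint x n k \<in> sets lebesgue" by (simp add: subint_def)
  ultimately have "((\<lambda>t. phi (h k t)) -` B \<inter> J k) \<inter> subint x n k \<in> sets lebesgue" by auto
  moreover have "((\<lambda>t. phi (h k t)) -` B \<inter> J k) \<inter> subint x n k = (\<lambda>t. phi (h k t)) -` B \<inter> subint x n k"
    using subint_J[OF k] by auto
  ultimately show ?thesis by simp
qed

lemma comp_meas:
  fixes phi :: "nat \<Rightarrow> real \<Rightarrow> 'b::topological_space"
  assumes phi: "\<And>k. k \<in> {1..n} \<Longrightarrow> phi k \<in> borel_measurable (lebesgue_on I)"
  shows "(\<lambda>t. phi (K t) (H t)) \<in> borel_measurable (lebesgue_on I)"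
proof (rule measurableI)
  fix B :: "'b set" assume B: "B \<in> sets borel"
  have "t \<in> (\<lambda>t. phi (K t) (H t)) -` B \<inter> space (lebesgue_on I) \<longleftrightarrow> t \<in> (\<Union>k\<in>{1..n}. (\<lambda>t. phi k (h k t)) -` B \<inter> subint x n k)" for t
  proof
    assume t: "t \<in> (\<lambda>t. phi (K t) (H t)) -` B \<inter> space (lebesgue_on I)"
    then have "t \<in> I" "phi (K t) (H t) \<in> B" by auto
    then show "t \<in> (\<Union>k\<in>{1..n}. (\<lambda>t. phi k (h k t)) -` B \<inter> subint x n k)"
      using K_props[of t] unfolding H_def by blast
  next
    assume "t \<in> (\<Union>k\<in>{1..n}. (\<lambda>t. phi k (h k t)) -` B \<inter> subint x n k)"
    then obtain k where a: "k \<in> {1..n}" "phi k (h k t) \<in> B" "t \<in> subint x n k" by blast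
    then have "phi (K t) (H t) \<in> B" using K_unique by (auto simp: H_def)
    moreover have "t \<in> I" using subint_I[OF a(1)] a(3) by blast
    ultimately show "t \<in> (\<lambda>t. phi (K t) (H t)) -` B \<inter> space (lebesgue_on I)" by simp
  qed
  then have eq: "(\<lambda>t. phi (K t) (H t)) -` B \<inter> space (lebesgue_on I) = (\<Union>k\<in>{1..n}. (\<lambda>t. phi k (h k t)) -` B \<inter> subint x n k)"
    by blast
  have "(\<Union>k\<in>{1..n}. (\<lambda>t. phi k (h k t)) -` B \<inter> subint x n k) \<in> sets (lebesgue_on I)"
  proof -
    have "(\<lambda>t. phi k (h k t)) -` B \<inter> subint x n k \<in> sets lebesgue" if "k \<in> {1..n}" for k
      using comp_piece_meas[OF that phi[OF that] B] .
    then have "(\<Union>k\<in>{1..n}. (\<lambda>t. phi k (h k t)) -` B \<inter> subint x n k) \<in> sets lebesgue" by auto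
    moreover have "(\<Union>k\<in>{1..n}. (\<lambda>t. phi k (h k t)) -` B \<inter> subint x n k) \<subseteq> I"
      using subint_I by blast
    ultimately show ?thesis unfolding sets_I_iff by blast
  qed
  then show "(\<lambda>t. phi (K t) (H t)) -` B \<inter> space (lebesgue_on I) \<in> sets (lebesgue_on I)"
    using eq by simp
qed simp

end

context RBL begin

lemma nn_comp:
  fixes psi :: "nat \<Rightarrow> real \<Rightarrow> ennreal"
  assumes psi: "\<And>k. k \<in> {1..n} \<Longrightarrow> psi k \<in> borel_measurable (lebesgue_on I)"
  shows "(\<integral>\<^sup>+t. psi (K t) (H t) \<partial>lebesgue_on I) = (\<Sum>k=1..n. \<integral>\<^sup>+u. ennreal \<bar>Dl k u\<bar> * psi k u \<partial>lebesgue_on I)"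
proof -
  define f where "f k t = (if K t = k then psi k (H t) else 0)" for k t
  have fmeas: "f k \<in> borel_measurable (lebesgue_on I)" if k: "k \<in> {1..n}" for k
  proof -
    have "(\<lambda>t. (\<lambda>j. if j = k then psi k else (\<lambda>_. 0)) (K t) (H t)) \<in> borel_measurable (lebesgue_on I)"
      by (rule comp_meas) (use psi k in auto)
    moreover have "(\<lambda>t. (\<lambda>j. if j = k then psi k else (\<lambda>_. 0)) (K t) (H t)) = f k"
      unfolding f_def by (rule ext) simp
    ultimately show ?thesis by simp
  qed
  have "(\<integral>\<^sup>+t. psi (K t) (H t) \<partial>lebesgue_on I) = (\<integral>\<^sup>+t. (\<Sum>k=1..n. f k t) \<partial>lebesgue_on I)"
  proof (rule nn_integral_cong)
    fix t assume "t \<in> space (lebesgue_on I)"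
    then have "K t \<in> {1..n}" using K_props(1) by simp
    then show "psi (K t) (H t) = (\<Sum>k=1..n. f k t)" unfolding f_def by (simp add: sum.delta')
  qed
  also have "\<dots> = (\<Sum>k=1..n. \<integral>\<^sup>+t. f k t \<partial>lebesgue_on I)"
    by (rule nn_integral_sum) (use fmeas in auto)
  also have "\<dots> = (\<Sum>k=1..n. \<integral>\<^sup>+u. ennreal \<bar>Dl k u\<bar> * psi k u \<partial>lebesgue_on I)"
  proof (rule sum.cong)
    fix k assume k: "k \<in> {1..n}"
    have "(\<integral>\<^sup>+t. f k t \<partial>lebesgue_on I) = (\<integral>\<^sup>+t. f k t * indicator I t \<partial>lebesgue)"
      by (simp add: nn_integral_restrict_space)
    also have "\<dots> = (\<integral>\<^sup>+t. psi k (h k t) * indicator (subint x n k) t \<partial>lebesgue)"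
    proof (rule nn_integral_cong)
      fix t
      show "f k t * indicator I t = psi k (h k t) * indicator (subint x n k) t"
        using K_iff[of t k] k subint_I[OF k] by (auto simp: f_def H_def indicator_def)
    qed
    also have "\<dots> = (\<integral>\<^sup>+t. psi k (h k t) * indicator (J k) t \<partial>lebesgue)"
    proof (rule nn_integral_cong_AE)
      have "{x k} \<in> null_sets lebesgue" by simp
      then show "AE t in lebesgue. psi k (h k t) * indicator (subint x n k) t = psi k (h k t) * indicator (J k) t"
        by (rule AE_mp[OF AE_not_in]) (auto simp: subint_def J_def indicator_def)
    qed
    also have "\<dots> = (\<integral>\<^sup>+t. psi k (h k t) \<partial>lebesgue_on (J k))"
      by (simp add: nn_integral_restrict_space)
    also have "\<dots> = (\<integral>\<^sup>+u. ennreal \<bar>Dl k u\<bar> * psi k u \<partial>lebesgue_on I)"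
      by (rule nn_transfer[OF k psi[OF k]])
    finally show "(\<integral>\<^sup>+t. f k t \<partial>lebesgue_on I) = (\<integral>\<^sup>+u. ennreal \<bar>Dl k u\<bar> * psi k u \<partial>lebesgue_on I)" .
  qed simp
  finally show ?thesis .
qed

lemma AE_comp:
  assumes P: "\<And>k. k \<in> {1..n} \<Longrightarrow> AE u in lebesgue_on I. P k u"
  shows "AE t in lebesgue_on I. P (K t) (H t)"
proof -
  have "\<forall>k\<in>{1..n}. \<exists>N. N \<in> null_sets (lebesgue_on I) \<and> (\<forall>u\<in>I - N. P k u)"
  proof
    fix k assume "k \<in> {1..n}"
    from AE_E3[OF P[OF this]] obtain N where "\<And>u. u \<in> space (lebesgue_on I) - N \<Longrightarrow> P k u"
      "N \<in> null_sets (lebesgue_on I)" by blast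
    then show "\<exists>N. N \<in> null_sets (lebesgue_on I) \<and> (\<forall>u\<in>I - N. P k u)" by auto
  qed
  then obtain N where N: "\<And>k. k \<in> {1..n} \<Longrightarrow> N k \<in> null_sets (lebesgue_on I)"
    "\<And>k u. k \<in> {1..n} \<Longrightarrow> u \<in> I - N k \<Longrightarrow> P k u"
    by metis
  define psi where "psi k = (indicator (N k) :: real \<Rightarrow> ennreal)" for k
  have psim: "psi k \<in> borel_measurable (lebesgue_on I)" if "k \<in> {1..n}" for k
    using N(1)[OF that] unfolding psi_def by (intro borel_measurable_indicator) auto
  have "(\<integral>\<^sup>+t. psi (K t) (H t) \<partial>lebesgue_on I) = (\<Sum>k=1..n. \<integral>\<^sup>+u. ennreal \<bar>Dl k u\<bar> * psi k u \<partial>lebesgue_on I)"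
    by (rule nn_comp[OF psim])
  also have "\<dots> = 0"
  proof (rule sum.neutral, rule ballI)
    fix k assume k: "k \<in> {1..n}"
    show "(\<integral>\<^sup>+u. ennreal \<bar>Dl k u\<bar> * psi k u \<partial>lebesgue_on I) = 0"
    proof -
      have m: "(\<lambda>u. ennreal \<bar>Dl k u\<bar> * psi k u) \<in> borel_measurable (lebesgue_on I)"
        using Dl_meas[OF k] psim[OF k] by measurable
      have "AE u in lebesgue_on I. ennreal \<bar>Dl k u\<bar> * psi k u = 0"
        using AE_not_in[OF N(1)[OF k]] by (rule AE_mp) (simp add: psi_def)
      then show ?thesis using nn_integral_0_iff_AE[OF m] by simp
    qed
  qed
  finally have "AE t in lebesgue_on I. psi (K t) (H t) = 0"
    using nn_integral_0_iff_AE[OF comp_meas[of psi, OF psim]] by simp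
  then show ?thesis
  proof (rule AE_mp, intro AE_I2 impI)
    fix t assume t: "t \<in> space (lebesgue_on I)" and "psi (K t) (H t) = 0"
    then have "H t \<notin> N (K t)" by (simp add: psi_def indicator_def split: if_splits)
    then show "P (K t) (H t)" using N(2)[of "K t" "H t"] K_props[of t] H_props[of t] t by auto
  qed
qed

end

lemma powr_sum_le:
  fixes a b lam p :: real
  assumes a: "0 \<le> a" and b: "0 \<le> b" and lam: "0 < lam" "lam < 1" and p: "1 \<le> p"
  shows "(a + b) powr p \<le> lam powr (1 - p) * a powr p + (1 - lam) powr (1 - p) * b powr p"
proof -
  have ge1: "1 \<le> y powr (1 - p)" if "0 < y" "y \<le> 1" for y :: real
  proof -
    have "y powr (p - 1) \<le> 1" using that p by (intro powr_le1) auto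
    moreover have "0 < y powr (p - 1)" using that by simp
    ultimately have "1 \<le> 1 / y powr (p - 1)" by simp
    also have "1 / y powr (p - 1) = y powr (1 - p)"
      using that by (simp add: powr_minus_divide[symmetric])
    finally show ?thesis .
  qed
  consider "a = 0" | "b = 0" | "0 < a" "0 < b" using a b by linarith
  then show ?thesis
  proof cases
    case 1
    have "1 \<le> (1 - lam) powr (1 - p)" using ge1[of "1 - lam"] lam by auto
    then have "b powr p \<le> (1 - lam) powr (1 - p) * b powr p"
      using mult_right_mono[of 1 "(1 - lam) powr (1 - p)" "b powr p"] by simp
    then show ?thesis using 1 by simp
  next
    case 2
    have "1 \<le> lam powr (1 - p)" using ge1[of lam] lam by auto
    then have "a powr p \<le> lam powr (1 - p) * a powr p"
      using mult_right_mono[of 1 "lam powr (1 - p)" "a powr p"] by simp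
    then show ?thesis using 2 by simp
  next
    case 3
    define u where "u = a / lam"
    define v where "v = b / (1 - lam)"
    have uv: "u \<in> {0<..}" "v \<in> {0<..}" using 3 lam by (auto simp: u_def v_def)
    have "(\<lambda>x. x powr p) ((1 - (1 - lam)) *\<^sub>R u + (1 - lam) *\<^sub>R v)
          \<le> (1 - (1 - lam)) * (\<lambda>x. x powr p) u + (1 - lam) * (\<lambda>x. x powr p) v"
      by (rule convex_onD[OF powr_convex[OF p]]) (use lam uv in auto)
    moreover have "(1 - (1 - lam)) *\<^sub>R u + (1 - lam) *\<^sub>R v = a + b"
      using lam by (simp add: u_def v_def)
    moreover have "lam * u powr p = lam powr (1 - p) * a powr p"
    proof -
      have "lam * u powr p = lam * (a powr p / lam powr p)" using a lam by (simp add: u_def powr_divide)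
      also have "\<dots> = (lam powr 1 / lam powr p) * a powr p" using lam by simp
      also have "\<dots> = lam powr (1 - p) * a powr p" using lam by (simp add: powr_diff)
      finally show ?thesis .
    qed
    moreover have "(1 - lam) * v powr p = (1 - lam) powr (1 - p) * b powr p"
    proof -
      have "(1 - lam) * v powr p = (1 - lam) * (b powr p / (1 - lam) powr p)" using b lam by (simp add: v_def powr_divide)
      also have "\<dots> = ((1 - lam) powr 1 / (1 - lam) powr p) * b powr p" using lam by simp
      also have "\<dots> = (1 - lam) powr (1 - p) * b powr p" using lam by (simp add: powr_diff)
      finally show ?thesis .
    qed
    ultimately show ?thesis by simp
  qed
qed

lemma exists_lam:
  fixes c p :: real
  assumes c: "0 \<le> c" "c < 1" and p: "1 \<le> p"
  shows "\<exists>lam. 0 < lam \<and> lam < 1 \<and> (1 - lam) powr (1 - p) * c < 1"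
proof (cases "p = 1")
  case True
  then show ?thesis using c by (intro exI[of _ "1/2"]) auto
next
  case False
  then have p1: "1 < p" using p by simp
  define r where "r = 2 / (1 + c)"
  have r: "1 < r" "r * c < 1" using c by (auto simp: r_def field_simps)
  define mu where "mu = r powr (1 / (1 - p))"
  have mu0: "0 < mu" using r by (simp add: mu_def)
  have mu1: "mu < 1" unfolding mu_def using r p1
    by (intro powr_less_one) (auto simp: divide_neg_pos)
  have "mu powr (1 - p) = r" unfolding mu_def using r p1 by (simp add: powr_powr)
  then show ?thesis using mu0 mu1 r by (intro exI[of _ "1 - mu"]) auto
qed

lemma ess_norm_inf_nonneg:
  assumes "\<exists>B. AE t in lebesgue_on I. \<bar>f t\<bar> \<le> B"
  shows "0 \<le> ess_norm_inf I f"
proof -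
  obtain B where B: "AE t in lebesgue_on I. \<bar>f t\<bar> \<le> B" using assms by blast
  then have "max B 0 \<in> {B. 0 \<le> B \<and> (AE t in lebesgue_on I. \<bar>f t\<bar> \<le> B)}"
    by (auto elim!: AE_mp)
  then have "{B. 0 \<le> B \<and> (AE t in lebesgue_on I. \<bar>f t\<bar> \<le> B)} \<noteq> {}" by blast
  then show ?thesis unfolding ess_norm_inf_def by (rule cInf_greatest) blast
qed

lemma ess_norm_inf_bound:
  assumes "\<exists>B. AE t in lebesgue_on I. \<bar>f t\<bar> \<le> B"
  shows "AE t in lebesgue_on I. \<bar>f t\<bar> \<le> ess_norm_inf I f"
proof -
  let ?E = "{B. 0 \<le> B \<and> (AE t in lebesgue_on I. \<bar>f t\<bar> \<le> B)}"
  obtain B where B: "AE t in lebesgue_on I. \<bar>f t\<bar> \<le> B" using assms by blast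
  then have ne: "max B 0 \<in> ?E" by (auto elim!: AE_mp)
  have bdd: "bdd_below ?E" by (auto intro: bdd_belowI[of _ 0])
  have "\<forall>m::nat. AE t in lebesgue_on I. \<bar>f t\<bar> \<le> ess_norm_inf I f + 1 / Suc m"
  proof
    fix m :: nat
    have "Inf ?E < ess_norm_inf I f + 1 / Suc m" unfolding ess_norm_inf_def by simp
    then obtain B' where "B' \<in> ?E" "B' < ess_norm_inf I f + 1 / Suc m"
      using cInf_lessD[of ?E] ne by blast
    then show "AE t in lebesgue_on I. \<bar>f t\<bar> \<le> ess_norm_inf I f + 1 / Suc m"
      by (auto elim!: AE_mp)
  qed
  then have "AE t in lebesgue_on I. \<forall>m::nat. \<bar>f t\<bar> \<le> ess_norm_inf I f + 1 / Suc m"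
    by (simp add: AE_all_countable)
  then show ?thesis
  proof (rule AE_mp, intro AE_I2 impI)
    fix t assume H: "\<forall>m::nat. \<bar>f t\<bar> \<le> ess_norm_inf I f + 1 / Suc m"
    show "\<bar>f t\<bar> \<le> ess_norm_inf I f"
    proof (rule field_le_epsilon)
      fix e :: real assume "0 < e"
      then obtain m :: nat where "1 / Suc m < e" using nat_approx_posE by blast
      then show "\<bar>f t\<bar> \<le> ess_norm_inf I f + e" using H[rule_format, of m] by linarith
    qed
  qed
qed

lemma max_min_abs: "max a b - min a b = \<bar>a - b :: real\<bar>" by (simp add: max_def min_def)

context RBL begin

definition "c k = ess_norm_inf I (\<lambda>t. Dl k t * S k t powr p)"
definition "cc = (\<Sum>k=1..n. c k)"
definition Tq :: "(nat \<Rightarrow> real \<Rightarrow> real) \<Rightarrow> (nat \<Rightarrow> real \<Rightarrow> real) \<Rightarrow> (real \<Rightarrow> real) \<Rightarrow> real \<Rightarrow> real"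
  where "Tq q' S' g t = q' (K t) (H t) + S' (K t) (H t) * g (H t)"
definition "good q' S' \<longleftrightarrow> (\<forall>k\<in>{1..n}. q' k \<in> borel_measurable (lebesgue_on I) \<and> S' k \<in> borel_measurable (lebesgue_on I)
   \<and> (AE u in lebesgue_on I. q' k u = q k u) \<and> (AE u in lebesgue_on I. S' k u = S k u))"

lemma goodD:
  assumes "good q' S'" "k \<in> {1..n}"
  shows "q' k \<in> borel_measurable (lebesgue_on I)" "S' k \<in> borel_measurable (lebesgue_on I)"
    "AE u in lebesgue_on I. q' k u = q k u" "AE u in lebesgue_on I. S' k u = S k u"
  using assms unfolding good_def by auto

lemma S_meas: "k \<in> {1..n} \<Longrightarrow> S k \<in> borel_measurable (lebesgue_on I)"
  using S_Linf by (auto simp: Linf_plus_def)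
lemma q_meas: "k \<in> {1..n} \<Longrightarrow> q k \<in> borel_measurable (lebesgue_on I)"
  using q_Lp by (auto simp: Lp_plus_def)
lemma S_nonneg: "k \<in> {1..n} \<Longrightarrow> AE u in lebesgue_on I. 0 \<le> S k u"
  using S_Linf by (auto simp: Linf_plus_def)
lemma q_nonneg: "k \<in> {1..n} \<Longrightarrow> AE u in lebesgue_on I. 0 \<le> q k u"
  using q_Lp by (auto simp: Lp_plus_def)
lemma S_bdd: "k \<in> {1..n} \<Longrightarrow> \<exists>B. AE u in lebesgue_on I. \<bar>S k u\<bar> \<le> B"
  using S_Linf by (auto simp: Linf_plus_def)
lemma Dl_bdd: "k \<in> {1..n} \<Longrightarrow> \<exists>B. AE u in lebesgue_on I. \<bar>Dl k u\<bar> \<le> B"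
  using Dl_Linf by (auto simp: Linf_plus_def)

lemma good_qS: "good q S"
  unfolding good_def using S_meas q_meas by auto

lemma prod_bdd:
  assumes k: "k \<in> {1..n}"
  shows "\<exists>B. AE t in lebesgue_on I. \<bar>Dl k t * S k t powr p\<bar> \<le> B"
proof -
  obtain B1 where B1: "AE u in lebesgue_on I. \<bar>Dl k u\<bar> \<le> B1" using Dl_bdd[OF k] by blast
  obtain B2 where B2: "AE u in lebesgue_on I. \<bar>S k u\<bar> \<le> B2" using S_bdd[OF k] by blast
  have "AE t in lebesgue_on I. \<bar>Dl k t * S k t powr p\<bar> \<le> B1 * B2 powr p"
    using B1 B2 S_nonneg[OF k]
  proof eventually_elim
    case (elim t)
    have "S k t powr p \<le> B2 powr p" using elim p by (intro powr_mono2) auto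
    then have "\<bar>Dl k t\<bar> * S k t powr p \<le> B1 * B2 powr p"
      using elim by (intro mult_mono) auto
    then show ?case by (simp add: abs_mult)
  qed
  then show ?thesis by blast
qed

lemma c_nonneg: "k \<in> {1..n} \<Longrightarrow> 0 \<le> c k"
  unfolding c_def by (rule ess_norm_inf_nonneg[OF prod_bdd])

lemma cc_nonneg: "0 \<le> cc"
  unfolding cc_def by (rule sum_nonneg) (use c_nonneg in auto)

lemma cc_less1: "cc < 1"
  using small unfolding cc_def c_def .

lemma c_AE:
  assumes k: "k \<in> {1..n}"
  shows "AE u in lebesgue_on I. \<bar>Dl k u\<bar> * \<bar>S k u\<bar> powr p \<le> c k"
  using ess_norm_inf_bound[OF prod_bdd[OF k]] S_nonneg[OF k]
proof eventually_elim
  case (elim u)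
  then show ?case by (simp add: c_def abs_mult)
qed

lemma Tq_meas:
  assumes g: "good q' S'" and gm: "f \<in> borel_measurable (lebesgue_on I)"
  shows "Tq q' S' f \<in> borel_measurable (lebesgue_on I)"
proof -
  have "(\<lambda>t. (\<lambda>k u. q' k u + S' k u * f u) (K t) (H t)) \<in> borel_measurable (lebesgue_on I)"
  proof (rule comp_meas)
    fix k assume "k \<in> {1..n}"
    then have [measurable]: "q' k \<in> borel_measurable (lebesgue_on I)" "S' k \<in> borel_measurable (lebesgue_on I)"
      using goodD[OF g] by auto
    note gm[measurable]
    show "(\<lambda>u. q' k u + S' k u * f u) \<in> borel_measurable (lebesgue_on I)" by measurable
  qed
  then show ?thesis unfolding Tq_def by simp
qed

lemma lin_bound:
  assumes g: "good q' S'" and fm: "f \<in> borel_measurable (lebesgue_on I)"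
  shows "(\<integral>\<^sup>+t. ennreal (\<bar>S' (K t) (H t) * f (H t)\<bar> powr p) \<partial>lebesgue_on I)
     \<le> ennreal cc * (\<integral>\<^sup>+u. ennreal (\<bar>f u\<bar> powr p) \<partial>lebesgue_on I)"
proof -
  have fpm: "(\<lambda>u. ennreal (\<bar>f u\<bar> powr p)) \<in> borel_measurable (lebesgue_on I)"
    using fm by measurable
  have "(\<integral>\<^sup>+t. ennreal (\<bar>S' (K t) (H t) * f (H t)\<bar> powr p) \<partial>lebesgue_on I)
     = (\<Sum>k=1..n. \<integral>\<^sup>+u. ennreal \<bar>Dl k u\<bar> * ennreal (\<bar>S' k u * f u\<bar> powr p) \<partial>lebesgue_on I)"
  proof (rule nn_comp[of "\<lambda>k u. ennreal (\<bar>S' k u * f u\<bar> powr p)"])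
    fix k assume "k \<in> {1..n}"
    then have [measurable]: "S' k \<in> borel_measurable (lebesgue_on I)" using goodD[OF g] by auto
    note fm[measurable]
    show "(\<lambda>u. ennreal (\<bar>S' k u * f u\<bar> powr p)) \<in> borel_measurable (lebesgue_on I)" by measurable
  qed
  also have "\<dots> \<le> (\<Sum>k=1..n. ennreal (c k) * \<integral>\<^sup>+u. ennreal (\<bar>f u\<bar> powr p) \<partial>lebesgue_on I)"
  proof (rule sum_mono)
    fix k assume k: "k \<in> {1..n}"
    have "(\<integral>\<^sup>+u. ennreal \<bar>Dl k u\<bar> * ennreal (\<bar>S' k u * f u\<bar> powr p) \<partial>lebesgue_on I)
        \<le> (\<integral>\<^sup>+u. ennreal (c k) * ennreal (\<bar>f u\<bar> powr p) \<partial>lebesgue_on I)"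
    proof (rule nn_integral_mono_AE)
      show "AE u in lebesgue_on I. ennreal \<bar>Dl k u\<bar> * ennreal (\<bar>S' k u * f u\<bar> powr p) \<le> ennreal (c k) * ennreal (\<bar>f u\<bar> powr p)"
        using c_AE[OF k] goodD(4)[OF g k]
      proof eventually_elim
        case (elim u)
        have eq: "\<bar>S' k u * f u\<bar> powr p = \<bar>S k u\<bar> powr p * \<bar>f u\<bar> powr p"
          using elim by (simp add: abs_mult powr_mult)
        have "\<bar>Dl k u\<bar> * (\<bar>S k u\<bar> powr p * \<bar>f u\<bar> powr p) \<le> c k * \<bar>f u\<bar> powr p"
          using elim by (simp add: mult.assoc[symmetric] mult_right_mono)
        then have "ennreal (\<bar>Dl k u\<bar> * (\<bar>S k u\<bar> powr p * \<bar>f u\<bar> powr p)) \<le> ennreal (c k * \<bar>f u\<bar> powr p)"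
          by (rule ennreal_leI)
        then show ?case using c_nonneg[OF k] by (simp add: eq ennreal_mult)
      qed
    qed
    also have "\<dots> = ennreal (c k) * \<integral>\<^sup>+u. ennreal (\<bar>f u\<bar> powr p) \<partial>lebesgue_on I"
      by (rule nn_integral_cmult[OF fpm])
    finally show "(\<integral>\<^sup>+u. ennreal \<bar>Dl k u\<bar> * ennreal (\<bar>S' k u * f u\<bar> powr p) \<partial>lebesgue_on I)
        \<le> ennreal (c k) * \<integral>\<^sup>+u. ennreal (\<bar>f u\<bar> powr p) \<partial>lebesgue_on I" .
  qed
  also have "\<dots> = ennreal cc * (\<integral>\<^sup>+u. ennreal (\<bar>f u\<bar> powr p) \<partial>lebesgue_on I)"
    unfolding cc_def sum_distrib_right[symmetric] using c_nonneg by (subst sum_ennreal) auto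
  finally show ?thesis .
qed

definition "Qc q' = (\<integral>\<^sup>+t. ennreal (\<bar>q' (K t) (H t)\<bar> powr p) \<partial>lebesgue_on I)"

lemma Lp_fin:
  assumes "Lp_plus p I f"
  shows "f \<in> borel_measurable (lebesgue_on I)" "(\<integral>\<^sup>+u. ennreal (\<bar>f u\<bar> powr p) \<partial>lebesgue_on I) < \<infinity>"
proof -
  show "f \<in> borel_measurable (lebesgue_on I)" using assms by (simp add: Lp_plus_def)
  have "integrable (lebesgue_on I) (\<lambda>t. \<bar>f t\<bar> powr p)" using assms by (simp add: Lp_plus_def)
  then show "(\<integral>\<^sup>+u. ennreal (\<bar>f u\<bar> powr p) \<partial>lebesgue_on I) < \<infinity>"
    unfolding integrable_iff_bounded by simp
qed

lemma Qc_fin: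
  assumes g: "good q' S'"
  shows "Qc q' < \<infinity>"
proof -
  have "Qc q' = (\<Sum>k=1..n. \<integral>\<^sup>+u. ennreal \<bar>Dl k u\<bar> * ennreal (\<bar>q' k u\<bar> powr p) \<partial>lebesgue_on I)"
    unfolding Qc_def
  proof (rule nn_comp[of "\<lambda>k u. ennreal (\<bar>q' k u\<bar> powr p)"])
    fix k assume "k \<in> {1..n}"
    then have [measurable]: "q' k \<in> borel_measurable (lebesgue_on I)" using goodD[OF g] by auto
    show "(\<lambda>u. ennreal (\<bar>q' k u\<bar> powr p)) \<in> borel_measurable (lebesgue_on I)" by measurable
  qed
  also have "\<dots> < top"
  proof (subst ennreal_sum_less_top, simp, intro ballI)
    fix k assume k: "k \<in> {1..n}"
    obtain B where B: "AE u in lebesgue_on I. \<bar>Dl k u\<bar> \<le> B" using Dl_bdd[OF k] by blast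
    have qm: "q k \<in> borel_measurable (lebesgue_on I)" using q_meas[OF k] .
    have fin: "(\<integral>\<^sup>+u. ennreal (\<bar>q k u\<bar> powr p) \<partial>lebesgue_on I) < \<infinity>"
      using Lp_fin(2) q_Lp k by blast
    have "(\<integral>\<^sup>+u. ennreal \<bar>Dl k u\<bar> * ennreal (\<bar>q' k u\<bar> powr p) \<partial>lebesgue_on I)
        \<le> (\<integral>\<^sup>+u. ennreal B * ennreal (\<bar>q k u\<bar> powr p) \<partial>lebesgue_on I)"
    proof (rule nn_integral_mono_AE)
      show "AE u in lebesgue_on I. ennreal \<bar>Dl k u\<bar> * ennreal (\<bar>q' k u\<bar> powr p) \<le> ennreal B * ennreal (\<bar>q k u\<bar> powr p)"
        using B goodD(3)[OF g k]
      proof eventually_elim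
        case (elim u)
        then show ?case by (intro mult_mono) auto
      qed
    qed
    also have "\<dots> = ennreal B * (\<integral>\<^sup>+u. ennreal (\<bar>q k u\<bar> powr p) \<partial>lebesgue_on I)"
      using qm by (intro nn_integral_cmult) measurable
    also have "\<dots> < \<infinity>" using fin by (simp add: ennreal_mult_less_top)
    finally show "(\<integral>\<^sup>+u. ennreal \<bar>Dl k u\<bar> * ennreal (\<bar>q' k u\<bar> powr p) \<partial>lebesgue_on I) < top" by simp
  qed
  finally show ?thesis by simp
qed

lemma T_bound:
  assumes g: "good q' S'" and fm: "f \<in> borel_measurable (lebesgue_on I)" and lam: "0 < lam" "lam < 1"
  shows "(\<integral>\<^sup>+t. ennreal (\<bar>Tq q' S' f t\<bar> powr p) \<partial>lebesgue_on I)
    \<le> ennreal (lam powr (1 - p)) * Qc q'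
      + ennreal ((1 - lam) powr (1 - p)) * (ennreal cc * (\<integral>\<^sup>+u. ennreal (\<bar>f u\<bar> powr p) \<partial>lebesgue_on I))"
proof -
  let ?a = "\<lambda>t. \<bar>q' (K t) (H t)\<bar> powr p" and ?b = "\<lambda>t. \<bar>S' (K t) (H t) * f (H t)\<bar> powr p"
  have am: "(\<lambda>t. q' (K t) (H t)) \<in> borel_measurable (lebesgue_on I)"
    by (rule comp_meas) (use goodD[OF g] in auto)
  have bm: "(\<lambda>t. S' (K t) (H t) * f (H t)) \<in> borel_measurable (lebesgue_on I)"
  proof -
    have "(\<lambda>t. (\<lambda>k u. S' k u * f u) (K t) (H t)) \<in> borel_measurable (lebesgue_on I)"
    proof (rule comp_meas)
      fix k assume "k \<in> {1..n}"
      then have [measurable]: "S' k \<in> borel_measurable (lebesgue_on I)" using goodD[OF g] by auto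
      note fm[measurable]
      show "(\<lambda>u. S' k u * f u) \<in> borel_measurable (lebesgue_on I)" by measurable
    qed
    then show ?thesis by simp
  qed
  have "(\<integral>\<^sup>+t. ennreal (\<bar>Tq q' S' f t\<bar> powr p) \<partial>lebesgue_on I)
      \<le> (\<integral>\<^sup>+t. ennreal (lam powr (1 - p)) * ennreal (?a t) + ennreal ((1 - lam) powr (1 - p)) * ennreal (?b t) \<partial>lebesgue_on I)"
  proof (rule nn_integral_mono)
    fix t
    have "\<bar>Tq q' S' f t\<bar> powr p \<le> (\<bar>q' (K t) (H t)\<bar> + \<bar>S' (K t) (H t) * f (H t)\<bar>) powr p"
      unfolding Tq_def using p by (intro powr_mono2) (auto simp: abs_triangle_ineq)
    also have "\<dots> \<le> lam powr (1 - p) * ?a t + (1 - lam) powr (1 - p) * ?b t"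
      by (rule powr_sum_le) (use lam p in auto)
    finally have "ennreal (\<bar>Tq q' S' f t\<bar> powr p) \<le> ennreal (lam powr (1 - p) * ?a t + (1 - lam) powr (1 - p) * ?b t)"
      by (rule ennreal_leI)
    then show "ennreal (\<bar>Tq q' S' f t\<bar> powr p) \<le> ennreal (lam powr (1 - p)) * ennreal (?a t) + ennreal ((1 - lam) powr (1 - p)) * ennreal (?b t)"
      by (simp add: ennreal_mult ennreal_plus)
  qed
  also have "\<dots> = ennreal (lam powr (1 - p)) * (\<integral>\<^sup>+t. ennreal (?a t) \<partial>lebesgue_on I) + ennreal ((1 - lam) powr (1 - p)) * (\<integral>\<^sup>+t. ennreal (?b t) \<partial>lebesgue_on I)"
    using am bm by (subst nn_integral_add) (auto simp: nn_integral_cmult)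
  also have "\<dots> \<le> ennreal (lam powr (1 - p)) * Qc q'
      + ennreal ((1 - lam) powr (1 - p)) * (ennreal cc * (\<integral>\<^sup>+u. ennreal (\<bar>f u\<bar> powr p) \<partial>lebesgue_on I))"
    unfolding Qc_def by (intro add_mono mult_left_mono lin_bound[OF g fm]) auto
  finally show ?thesis .
qed

end

context RBL begin

lemma RB_Tq: "t \<in> I \<Longrightarrow> RB_op x n l q' S' g t = Tq q' S' g t"
  using RB_op_eq by (simp add: Tq_def)

lemma RB_meas:
  assumes "good q' S'" "f \<in> borel_measurable (lebesgue_on I)"
  shows "RB_op x n l q' S' f \<in> borel_measurable (lebesgue_on I)"
proof -
  have "Tq q' S' f \<in> borel_measurable (lebesgue_on I)" by (rule Tq_meas[OF assms])
  then show ?thesis by (subst measurable_cong[where g="Tq q' S' f"]) (auto simp: RB_Tq)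
qed

lemma Tq_nonneg_AE:
  assumes "AE u in lebesgue_on I. 0 \<le> f u"
  shows "AE t in lebesgue_on I. 0 \<le> Tq q S f t"
proof -
  have "AE t in lebesgue_on I. (\<lambda>k u. 0 \<le> q k u \<and> 0 \<le> S k u \<and> 0 \<le> f u) (K t) (H t)"
  proof (rule AE_comp)
    fix k assume k: "k \<in> {1..n}"
    show "AE u in lebesgue_on I. 0 \<le> q k u \<and> 0 \<le> S k u \<and> 0 \<le> f u"
      using q_nonneg[OF k] S_nonneg[OF k] assms by eventually_elim auto
  qed
  then show ?thesis by eventually_elim (auto simp: Tq_def)
qed

lemma norm_powr_abs[simp]: "norm (\<bar>a::real\<bar> powr p) = \<bar>a\<bar> powr p"
  by simp

lemma part1:
  assumes g: "Lp_plus p I f"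
  shows "Lp_plus p I (RB_op x n l q S f)"
proof -
  have fm: "f \<in> borel_measurable (lebesgue_on I)" using Lp_fin[OF g] by simp
  have m: "RB_op x n l q S f \<in> borel_measurable (lebesgue_on I)" by (rule RB_meas[OF good_qS fm])
  have "AE t in lebesgue_on I. 0 \<le> Tq q S f t"
    using g by (intro Tq_nonneg_AE) (simp add: Lp_plus_def)
  then have nn: "AE t in lebesgue_on I. 0 \<le> RB_op x n l q S f t"
    by (rule AE_mp) (auto intro!: AE_I2 simp: RB_Tq)
  have "(\<integral>\<^sup>+t. ennreal (\<bar>RB_op x n l q S f t\<bar> powr p) \<partial>lebesgue_on I) = (\<integral>\<^sup>+t. ennreal (\<bar>Tq q S f t\<bar> powr p) \<partial>lebesgue_on I)"
    by (rule nn_integral_cong) (simp add: RB_Tq)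
  also have "\<dots> \<le> ennreal ((1/2) powr (1 - p)) * Qc q
      + ennreal ((1 - 1/2) powr (1 - p)) * (ennreal cc * (\<integral>\<^sup>+u. ennreal (\<bar>f u\<bar> powr p) \<partial>lebesgue_on I))"
    by (rule T_bound[OF good_qS fm]) auto
  also have "\<dots> < \<infinity>"
    using Qc_fin[OF good_qS] Lp_fin(2)[OF g] by (simp add: ennreal_mult_less_top)
  finally have fin: "(\<integral>\<^sup>+t. ennreal (\<bar>RB_op x n l q S f t\<bar> powr p) \<partial>lebesgue_on I) < \<infinity>" .
  have "integrable (lebesgue_on I) (\<lambda>t. \<bar>RB_op x n l q S f t\<bar> powr p)"
  proof (subst integrable_iff_bounded, intro conjI)
    note m[measurable]
    show "(\<lambda>t. \<bar>RB_op x n l q S f t\<bar> powr p) \<in> borel_measurable (lebesgue_on I)" by measurable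
    show "(\<integral>\<^sup>+t. ennreal (norm (\<bar>RB_op x n l q S f t\<bar> powr p)) \<partial>lebesgue_on I) < \<infinity>"
      using fin by simp
  qed
  then show ?thesis using m nn unfolding Lp_plus_def by simp
qed

lemma dp_eq:
  assumes [measurable]: "f \<in> borel_measurable (lebesgue_on I)" "g \<in> borel_measurable (lebesgue_on I)"
  shows "d_p p I f g = enn2real (\<integral>\<^sup>+t. ennreal (\<bar>f t - g t\<bar> powr p) \<partial>lebesgue_on I)"
  unfolding d_p_def max_min_abs by (rule integral_eq_nn_integral) auto

lemma diff_fin:
  assumes f: "Lp_plus p I f" and g: "Lp_plus p I g"
  shows "(\<integral>\<^sup>+t. ennreal (\<bar>f t - g t\<bar> powr p) \<partial>lebesgue_on I) < \<infinity>"
proof -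
  note fm[measurable] = Lp_fin(1)[OF f] and gm[measurable] = Lp_fin(1)[OF g]
  let ?A = "(1/2::real) powr (1 - p)"
  have "(\<integral>\<^sup>+t. ennreal (\<bar>f t - g t\<bar> powr p) \<partial>lebesgue_on I)
      \<le> (\<integral>\<^sup>+t. ennreal ?A * ennreal (\<bar>f t\<bar> powr p) + ennreal ?A * ennreal (\<bar>g t\<bar> powr p) \<partial>lebesgue_on I)"
  proof (rule nn_integral_mono)
    fix t
    have "\<bar>f t - g t\<bar> powr p \<le> (\<bar>f t\<bar> + \<bar>g t\<bar>) powr p"
      using p by (intro powr_mono2) auto
    also have "\<dots> \<le> ?A * \<bar>f t\<bar> powr p + (1 - 1/2) powr (1 - p) * \<bar>g t\<bar> powr p"
      by (rule powr_sum_le) (use p in auto)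
    finally have "ennreal (\<bar>f t - g t\<bar> powr p) \<le> ennreal (?A * \<bar>f t\<bar> powr p + ?A * \<bar>g t\<bar> powr p)"
      by (intro ennreal_leI) simp
    then show "ennreal (\<bar>f t - g t\<bar> powr p) \<le> ennreal ?A * ennreal (\<bar>f t\<bar> powr p) + ennreal ?A * ennreal (\<bar>g t\<bar> powr p)"
      by (simp add: ennreal_mult ennreal_plus)
  qed
  also have "\<dots> = ennreal ?A * (\<integral>\<^sup>+t. ennreal (\<bar>f t\<bar> powr p) \<partial>lebesgue_on I) + ennreal ?A * (\<integral>\<^sup>+t. ennreal (\<bar>g t\<bar> powr p) \<partial>lebesgue_on I)"
    by (subst nn_integral_add) (auto simp: nn_integral_cmult)
  also have "\<dots> < \<infinity>" using Lp_fin(2)[OF f] Lp_fin(2)[OF g] by (simp add: ennreal_mult_less_top)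
  finally show ?thesis .
qed

lemma part2:
  assumes f: "Lp_plus p I f" and g: "Lp_plus p I g"
  shows "d_p p I (RB_op x n l q S f) (RB_op x n l q S g) \<le> cc * d_p p I f g"
proof -
  note fm[measurable] = Lp_fin(1)[OF f] and gm[measurable] = Lp_fin(1)[OF g]
  have dfm: "(\<lambda>u. f u - g u) \<in> borel_measurable (lebesgue_on I)" by measurable
  have "(\<integral>\<^sup>+t. ennreal (\<bar>RB_op x n l q S f t - RB_op x n l q S g t\<bar> powr p) \<partial>lebesgue_on I)
     = (\<integral>\<^sup>+t. ennreal (\<bar>S (K t) (H t) * (\<lambda>u. f u - g u) (H t)\<bar> powr p) \<partial>lebesgue_on I)"
    by (rule nn_integral_cong) (simp add: RB_Tq Tq_def algebra_simps)
  also have "\<dots> \<le> ennreal cc * (\<integral>\<^sup>+u. ennreal (\<bar>f u - g u\<bar> powr p) \<partial>lebesgue_on I)"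
    using lin_bound[OF good_qS dfm] by simp
  finally have le: "(\<integral>\<^sup>+t. ennreal (\<bar>RB_op x n l q S f t - RB_op x n l q S g t\<bar> powr p) \<partial>lebesgue_on I)
      \<le> ennreal cc * (\<integral>\<^sup>+u. ennreal (\<bar>f u - g u\<bar> powr p) \<partial>lebesgue_on I)" .
  have fin: "ennreal cc * (\<integral>\<^sup>+u. ennreal (\<bar>f u - g u\<bar> powr p) \<partial>lebesgue_on I) < top"
    using diff_fin[OF f g] by (simp add: ennreal_mult_less_top)
  have "d_p p I (RB_op x n l q S f) (RB_op x n l q S g)
      = enn2real (\<integral>\<^sup>+t. ennreal (\<bar>RB_op x n l q S f t - RB_op x n l q S g t\<bar> powr p) \<partial>lebesgue_on I)"
    by (rule dp_eq) (auto intro: RB_meas good_qS)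
  also have "\<dots> \<le> enn2real (ennreal cc * (\<integral>\<^sup>+u. ennreal (\<bar>f u - g u\<bar> powr p) \<partial>lebesgue_on I))"
    by (rule enn2real_mono[OF le fin])
  also have "\<dots> = cc * d_p p I f g"
    using cc_nonneg by (simp add: dp_eq enn2real_mult)
  finally show ?thesis .
qed

lemma dp_zero:
  assumes f: "Lp_plus p I f" and g: "Lp_plus p I g" and d: "d_p p I f g = 0"
  shows "AE t in lebesgue_on I. f t = g t"
proof -
  note fm[measurable] = Lp_fin(1)[OF f] and gm[measurable] = Lp_fin(1)[OF g]
  have "enn2real (\<integral>\<^sup>+t. ennreal (\<bar>f t - g t\<bar> powr p) \<partial>lebesgue_on I) = 0"
    using d dp_eq by simp
  then have "(\<integral>\<^sup>+t. ennreal (\<bar>f t - g t\<bar> powr p) \<partial>lebesgue_on I) = 0"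
    using diff_fin[OF f g] by (auto simp: enn2real_eq_0_iff)
  then have "AE t in lebesgue_on I. ennreal (\<bar>f t - g t\<bar> powr p) = 0"
    by (subst (asm) nn_integral_0_iff_AE) auto
  then show ?thesis by eventually_elim simp
qed

lemma dp_cong:
  assumes [measurable]: "f \<in> borel_measurable (lebesgue_on I)" "g \<in> borel_measurable (lebesgue_on I)"
    "f' \<in> borel_measurable (lebesgue_on I)" "g' \<in> borel_measurable (lebesgue_on I)"
    and ae: "AE t in lebesgue_on I. f t = f' t" "AE t in lebesgue_on I. g t = g' t"
  shows "d_p p I f g = d_p p I f' g'"
  unfolding d_p_def
  by (rule integral_cong_AE) (use ae in \<open>auto elim!: AE_mp\<close>)

lemma dp_nonneg:
  "d_p p I f g \<ge> 0"
  unfolding d_p_def by (rule integral_nonneg_AE) auto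

lemma unique_fix:
  assumes g: "Lp_plus p I g" and f: "Lp_plus p I f"
    and gfix: "AE t in lebesgue_on I. RB_op x n l q S g t = g t"
    and ffix: "AE t in lebesgue_on I. RB_op x n l q S f t = f t"
  shows "AE t in lebesgue_on I. g t = f t"
proof -
  note fm = Lp_fin(1)[OF f] and gm = Lp_fin(1)[OF g]
  have "d_p p I g f = d_p p I (RB_op x n l q S g) (RB_op x n l q S f)"
  proof (rule dp_cong[OF gm fm RB_meas[OF good_qS gm] RB_meas[OF good_qS fm]])
    show "AE t in lebesgue_on I. g t = RB_op x n l q S g t" using gfix by eventually_elim simp
    show "AE t in lebesgue_on I. f t = RB_op x n l q S f t" using ffix by eventually_elim simp
  qed
  also have "\<dots> \<le> cc * d_p p I g f" by (rule part2[OF g f])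
  finally have "d_p p I g f \<le> cc * d_p p I g f" .
  then have "d_p p I g f = 0" using cc_less1 dp_nonneg[of g f]
    by (metis mult_le_cancel_right1 not_le order_antisym)
  then show ?thesis by (rule dp_zero[OF g f])
qed

end

context RBL begin

definition pos :: "(nat \<Rightarrow> real \<Rightarrow> real) \<Rightarrow> (nat \<Rightarrow> real \<Rightarrow> real) \<Rightarrow> bool" where "pos q' S' \<longleftrightarrow> (\<forall>k\<in>{1..n}. \<forall>u\<in>I. 0 \<le> q' k u \<and> 0 \<le> S' k u)"
definition G :: "(nat \<Rightarrow> real \<Rightarrow> real) \<Rightarrow> (nat \<Rightarrow> real \<Rightarrow> real) \<Rightarrow> nat \<Rightarrow> real \<Rightarrow> real" where "G q' S' m = ((Tq q' S') ^^ m) (\<lambda>_. 0)"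
definition "lam0 = (SOME lam. 0 < lam \<and> lam < 1 \<and> (1 - lam) powr (1 - p) * cc < 1)"
definition "Mb q' = (lam0 powr (1 - p) * enn2real (Qc q')) / (1 - (1 - lam0) powr (1 - p) * cc)"

lemma lam0: "0 < lam0" "lam0 < 1" "(1 - lam0) powr (1 - p) * cc < 1"
proof -
  have "\<exists>lam. 0 < lam \<and> lam < 1 \<and> (1 - lam) powr (1 - p) * cc < 1"
    using exists_lam[OF cc_nonneg cc_less1 p] .
  from someI_ex[OF this] show "0 < lam0" "lam0 < 1" "(1 - lam0) powr (1 - p) * cc < 1"
    unfolding lam0_def by auto
qed

lemma G_0[simp]: "G q' S' 0 = (\<lambda>_. 0)" by (simp add: G_def)
lemma G_Suc: "G q' S' (Suc m) = Tq q' S' (G q' S' m)" by (simp add: G_def)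

lemma KH_in: "t \<in> I \<Longrightarrow> K t \<in> {1..n} \<and> H t \<in> I"
  using K_props H_props by blast

lemma posD: "pos q' S' \<Longrightarrow> t \<in> I \<Longrightarrow> 0 \<le> q' (K t) (H t) \<and> 0 \<le> S' (K t) (H t)"
  using KH_in unfolding pos_def by blast

lemma G_nonneg: "pos q' S' \<Longrightarrow> t \<in> I \<Longrightarrow> 0 \<le> G q' S' m t"
proof (induction m arbitrary: t)
  case 0 then show ?case by simp
next
  case (Suc m)
  have "0 \<le> G q' S' m (H t)" using Suc KH_in by blast
  then show ?case using posD[OF Suc.prems] by (simp add: G_Suc Tq_def)
qed

lemma G_step: "pos q' S' \<Longrightarrow> t \<in> I \<Longrightarrow> G q' S' m t \<le> G q' S' (Suc m) t"
proof (induction m arbitrary: t)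
  case 0 then show ?case using G_nonneg[of q' S' t 1] by simp
next
  case (Suc m)
  have "G q' S' m (H t) \<le> G q' S' (Suc m) (H t)" using Suc KH_in by blast
  then have "S' (K t) (H t) * G q' S' m (H t) \<le> S' (K t) (H t) * G q' S' (Suc m) (H t)"
    using posD[OF Suc.prems] by (intro mult_left_mono) auto
  then show ?case by (simp add: G_Suc[of q' S' "Suc m"] G_Suc[of q' S' m] Tq_def)
qed

lemma G_mono: "pos q' S' \<Longrightarrow> t \<in> I \<Longrightarrow> m \<le> m' \<Longrightarrow> G q' S' m t \<le> G q' S' m' t"
  using lift_Suc_mono_le[of "\<lambda>m. G q' S' m t"] G_step by blast

lemma G_meas: "good q' S' \<Longrightarrow> G q' S' m \<in> borel_measurable (lebesgue_on I)"
  by (induction m) (auto simp: G_Suc intro: Tq_meas)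

lemma G_int:
  assumes g: "good q' S'" and ps: "pos q' S'"
  shows "(\<integral>\<^sup>+t. ennreal (\<bar>G q' S' m t\<bar> powr p) \<partial>lebesgue_on I) \<le> ennreal (Mb q')"
proof (induction m)
  case 0 then show ?case by simp
next
  case (Suc m)
  define Q where "Q = enn2real (Qc q')"
  let ?A = "lam0 powr (1 - p)" and ?B = "(1 - lam0) powr (1 - p)" and ?Q = Q
  have Qc: "Qc q' = ennreal ?Q" using Qc_fin[OF g] unfolding Q_def by simp
  have Bc: "?B * cc < 1" using lam0 by simp
  have M: "?A * ?Q + ?B * cc * Mb q' = Mb q'"
    using Bc unfolding Mb_def Q_def by (simp add: field_simps)
  have Mnn: "0 \<le> Mb q'" unfolding Mb_def using Bc by (intro divide_nonneg_pos) auto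
  have "(\<integral>\<^sup>+t. ennreal (\<bar>G q' S' (Suc m) t\<bar> powr p) \<partial>lebesgue_on I)
      \<le> ennreal ?A * Qc q' + ennreal ?B * (ennreal cc * (\<integral>\<^sup>+u. ennreal (\<bar>G q' S' m u\<bar> powr p) \<partial>lebesgue_on I))"
    unfolding G_Suc by (rule T_bound[OF g G_meas[OF g] lam0(1,2)])
  also have "\<dots> \<le> ennreal ?A * ennreal ?Q + ennreal ?B * (ennreal cc * ennreal (Mb q'))"
    unfolding Qc by (intro add_mono mult_left_mono Suc.IH) auto
  also have "\<dots> = ennreal (?A * ?Q + ?B * cc * Mb q')"
    using cc_nonneg Mnn enn2real_nonneg[of "Qc q'"] unfolding Q_def[symmetric]
    by (simp add: ennreal_mult ennreal_plus mult.assoc mult_nonneg_nonneg)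
  also have "\<dots> = ennreal (Mb q')" using M by simp
  finally show ?case .
qed

lemma G_bdd_AE:
  assumes g: "good q' S'" and ps: "pos q' S'"
  shows "AE t in lebesgue_on I. \<exists>B::nat. \<forall>m. G q' S' m t \<le> real B"
proof -
  define F where "F m t = ennreal (\<bar>G q' S' m t\<bar> powr p)" for m t
  have Fm[measurable]: "F m \<in> borel_measurable (lebesgue_on I)" for m
    unfolding F_def using G_meas[OF g] by measurable
  have Fmono: "AE t in lebesgue_on I. F m t \<le> F (Suc m) t" for m
  proof (rule AE_I2)
    fix t assume "t \<in> space (lebesgue_on I)"
    then have t: "t \<in> I" by simp
    show "F m t \<le> F (Suc m) t"
      unfolding F_def using G_nonneg[OF ps t] G_step[OF ps t] p
      by (intro ennreal_leI powr_mono2) auto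
  qed
  have "(\<integral>\<^sup>+t. (SUP m. F m t) \<partial>lebesgue_on I) = (SUP m. integral\<^sup>N (lebesgue_on I) (F m))"
    by (rule nn_integral_monotone_convergence_SUP_AE[of F "lebesgue_on I", OF Fmono Fm])
  also have "\<dots> \<le> ennreal (Mb q')"
    unfolding F_def by (rule SUP_least) (rule G_int[OF g ps])
  finally have "(\<integral>\<^sup>+t. (SUP m. F m t) \<partial>lebesgue_on I) \<noteq> \<infinity>"
    using top_neq_ennreal by (metis infinity_ennreal_def neq_top_trans)
  then have "AE t in lebesgue_on I. (SUP m. F m t) \<noteq> \<infinity>"
    by (intro nn_integral_PInf_AE) measurable
  then show ?thesis
  proof (rule AE_mp, intro AE_I2 impI)
    fix t assume "t \<in> space (lebesgue_on I)" and fin: "(SUP m. F m t) \<noteq> \<infinity>"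
    then have t: "t \<in> I" by simp
    define R where "R = enn2real (SUP m. F m t)"
    have "(SUP m. F m t) < top" using fin by (metis infinity_ennreal_def less_top)
    then have SR: "(SUP m. F m t) = ennreal R" unfolding R_def by simp
    have "G q' S' m t \<le> max 1 R" for m
    proof -
      have "F m t \<le> ennreal R" unfolding SR[symmetric] by (rule SUP_upper) simp
      then have le: "\<bar>G q' S' m t\<bar> powr p \<le> R" unfolding F_def
        using enn2real_nonneg[of "SUP m. F m t"] unfolding R_def[symmetric] by (subst (asm) ennreal_le_iff) auto
      show ?thesis
      proof (cases "1 \<le> G q' S' m t")
        case True
        have "G q' S' m t = G q' S' m t powr 1" using True by simp
        also have "\<dots> \<le> G q' S' m t powr p" using True p by (intro powr_mono) auto
        also have "\<dots> \<le> R" using le True by simp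
        finally show ?thesis by simp
      qed simp
    qed
    moreover obtain B :: nat where "max 1 R \<le> real B" using real_arch_simple by blast
    ultimately show "\<exists>B::nat. \<forall>m. G q' S' m t \<le> real B" by (meson order_trans)
  qed
qed

lemma G_lim:
  assumes ps: "pos q' S'" and t: "t \<in> I" and B: "\<forall>m. G q' S' m t \<le> B"
  shows "(\<lambda>m. G q' S' m t) \<longlonglongrightarrow> (SUP m. G q' S' m t)"
proof (rule LIMSEQ_incseq_SUP)
  show "bdd_above (range (\<lambda>m. G q' S' m t))" using B by (auto intro: bdd_aboveI)
  show "incseq (\<lambda>m. G q' S' m t)" using G_step[OF ps t] by (rule incseq_SucI)
qed

end

context RBL begin

lemma G_sup_int:
  assumes g: "good q' S'" and ps: "pos q' S'"
  shows "(\<integral>\<^sup>+t. (SUP m. ennreal (\<bar>G q' S' m t\<bar> powr p)) \<partial>lebesgue_on I) \<le> ennreal (Mb q')"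
proof -
  define F where "F m t = ennreal (\<bar>G q' S' m t\<bar> powr p)" for m t
  have Fm[measurable]: "F m \<in> borel_measurable (lebesgue_on I)" for m
    unfolding F_def using G_meas[OF g] by measurable
  have Fmono: "AE t in lebesgue_on I. F m t \<le> F (Suc m) t" for m
  proof (rule AE_I2)
    fix t assume "t \<in> space (lebesgue_on I)"
    then have t: "t \<in> I" by simp
    show "F m t \<le> F (Suc m) t"
      unfolding F_def using G_nonneg[OF ps t] G_step[OF ps t] p
      by (intro ennreal_leI powr_mono2) auto
  qed
  have "(\<integral>\<^sup>+t. (SUP m. F m t) \<partial>lebesgue_on I) = (SUP m. integral\<^sup>N (lebesgue_on I) (F m))"
    by (rule nn_integral_monotone_convergence_SUP_AE[of F "lebesgue_on I", OF Fmono Fm])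
  also have "\<dots> \<le> ennreal (Mb q')"
    unfolding F_def by (rule SUP_least) (rule G_int[OF g ps])
  finally show ?thesis unfolding F_def .
qed

definition q1 :: "nat \<Rightarrow> real \<Rightarrow> real" where "q1 k u = (if u = x 0 \<or> u = x n then 0 else max 0 (q k u))"
definition S1 :: "nat \<Rightarrow> real \<Rightarrow> real" where "S1 k u = (if u = x 0 \<or> u = x n then 0 else max 0 (S k u))"

lemma AE_not_ends: "AE u in lebesgue_on I. u \<noteq> x 0 \<and> u \<noteq> x n"
proof -
  have "{x 0, x n} \<in> null_sets (lebesgue_on I)"
    using x_le[of 0 n] by (subst null_sets_restrict_space) auto
  from AE_not_in[OF this] show ?thesis by eventually_elim auto
qed

lemma good1: "good q1 S1"
  unfolding good_def
proof (intro ballI conjI)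
  fix k assume k: "k \<in> {1..n}"
  note [measurable] = q_meas[OF k] S_meas[OF k]
  have E: "{x 0, x n} \<inter> space (lebesgue_on I) \<in> sets (lebesgue_on I)"
    unfolding sets_I_iff by auto
  have e1: "q1 k = (\<lambda>u. if u \<in> {x 0, x n} then 0 else max 0 (q k u))" by (auto simp: q1_def fun_eq_iff)
  have e2: "S1 k = (\<lambda>u. if u \<in> {x 0, x n} then 0 else max 0 (S k u))" by (auto simp: S1_def fun_eq_iff)
  show "q1 k \<in> borel_measurable (lebesgue_on I)" unfolding e1
    by (rule measurable_If_set[OF _ _ E]) measurable
  show "S1 k \<in> borel_measurable (lebesgue_on I)" unfolding e2
    by (rule measurable_If_set[OF _ _ E]) measurable
  show "AE u in lebesgue_on I. q1 k u = q k u"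
    using AE_not_ends q_nonneg[OF k] by eventually_elim (auto simp: q1_def)
  show "AE u in lebesgue_on I. S1 k u = S k u"
    using AE_not_ends S_nonneg[OF k] by eventually_elim (auto simp: S1_def)
qed

lemma pos1: "pos q1 S1" unfolding pos_def q1_def S1_def by auto

definition "Bd u \<longleftrightarrow> (\<exists>B::nat. \<forall>m. G q1 S1 m u \<le> real B)"
definition S2 :: "nat \<Rightarrow> real \<Rightarrow> real" where "S2 k u = (if Bd u then S1 k u else 0)"

lemma good2: "good q1 S2"
  unfolding good_def
proof (intro ballI conjI)
  fix k assume k: "k \<in> {1..n}"
  note [measurable] = goodD[OF good1 k] G_meas[OF good1]
  show "q1 k \<in> borel_measurable (lebesgue_on I)" by measurable
  show "S2 k \<in> borel_measurable (lebesgue_on I)" unfolding S2_def Bd_def by measurable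
  show "AE u in lebesgue_on I. q1 k u = q k u" using goodD(3)[OF good1 k] .
  show "AE u in lebesgue_on I. S2 k u = S k u"
    using G_bdd_AE[OF good1 pos1] goodD(4)[OF good1 k] by eventually_elim (auto simp: S2_def Bd_def)
qed

lemma pos2: "pos q1 S2" unfolding pos_def q1_def S1_def S2_def by auto

lemma G2_le: "t \<in> I \<Longrightarrow> G q1 S2 m t \<le> G q1 S1 m t"
proof (induction m arbitrary: t)
  case 0 then show ?case by simp
next
  case (Suc m)
  have le: "G q1 S2 m (H t) \<le> G q1 S1 m (H t)" using Suc KH_in by blast
  have "S2 (K t) (H t) * G q1 S2 m (H t) \<le> S1 (K t) (H t) * G q1 S1 m (H t)"
    using le G_nonneg[OF pos2, of "H t" m] KH_in[OF Suc.prems] posD[OF pos1 Suc.prems]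
    by (intro mult_mono) (auto simp: S2_def)
  then show ?case by (simp add: G_Suc Tq_def)
qed

lemma G2_bdd:
  assumes t: "t \<in> I"
  shows "\<exists>B. \<forall>m. G q1 S2 m t \<le> B"
proof (cases "Bd (H t)")
  case True
  then obtain B :: nat where B: "\<forall>m. G q1 S1 m (H t) \<le> real B" unfolding Bd_def by blast
  have "G q1 S2 m t \<le> q1 (K t) (H t) + S1 (K t) (H t) * real B" for m
  proof (cases m)
    case 0 then show ?thesis using posD[OF pos1 t] by simp
  next
    case (Suc m')
    have "G q1 S2 m' (H t) \<le> real B"
      using G2_le[of "H t" m'] B KH_in[OF t] by (meson order_trans)
    then have "S2 (K t) (H t) * G q1 S2 m' (H t) \<le> S1 (K t) (H t) * real B"
      using True posD[OF pos1 t] by (auto simp: S2_def intro: mult_left_mono)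
    then show ?thesis using Suc by (simp add: G_Suc Tq_def)
  qed
  then show ?thesis by blast
next
  case False
  have "G q1 S2 m t \<le> q1 (K t) (H t)" for m
    using False posD[OF pos1 t] by (cases m) (auto simp: G_Suc Tq_def S2_def)
  then show ?thesis by blast
qed

definition "ff t = (SUP m. G q1 S2 m t)"

lemma ff_lim: "t \<in> I \<Longrightarrow> (\<lambda>m. G q1 S2 m t) \<longlonglongrightarrow> ff t"
  unfolding ff_def using G2_bdd G_lim[OF pos2] by blast

lemma ff_eq: "t \<in> I \<Longrightarrow> ff t = Tq q1 S2 ff t"
proof -
  assume t: "t \<in> I"
  have "(\<lambda>m. G q1 S2 (Suc m) t) \<longlonglongrightarrow> ff t" using ff_lim[OF t] by (rule LIMSEQ_Suc)
  moreover have "(\<lambda>m. G q1 S2 (Suc m) t) = (\<lambda>m. q1 (K t) (H t) + S2 (K t) (H t) * G q1 S2 m (H t))"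
    by (simp add: G_Suc Tq_def)
  moreover have "(\<lambda>m. q1 (K t) (H t) + S2 (K t) (H t) * G q1 S2 m (H t)) \<longlonglongrightarrow> q1 (K t) (H t) + S2 (K t) (H t) * ff (H t)"
    using ff_lim KH_in[OF t] by (intro tendsto_intros) auto
  ultimately show ?thesis unfolding Tq_def using LIMSEQ_unique by metis
qed

lemma ff_nonneg: "t \<in> I \<Longrightarrow> 0 \<le> ff t"
  using ff_lim G_nonneg[OF pos2] by (intro LIMSEQ_le_const[of "\<lambda>m. G q1 S2 m t"]) auto

lemma ff_meas: "ff \<in> borel_measurable (lebesgue_on I)"
  by (rule borel_measurable_LIMSEQ_real[where u="G q1 S2"]) (auto intro: ff_lim G_meas[OF good2])

lemma ff_Lp: "Lp_plus p I ff"
proof -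
  have pw: "ennreal (\<bar>ff t\<bar> powr p) \<le> (SUP m. ennreal (\<bar>G q1 S2 m t\<bar> powr p))" if t: "t \<in> I" for t
  proof (rule LIMSEQ_le_const2)
    show "(\<lambda>m. ennreal (\<bar>G q1 S2 m t\<bar> powr p)) \<longlonglongrightarrow> ennreal (\<bar>ff t\<bar> powr p)"
      using ff_lim[OF t] p by (intro tendsto_ennrealI tendsto_powr2 tendsto_rabs) auto
    show "\<exists>N. \<forall>m\<ge>N. ennreal (\<bar>G q1 S2 m t\<bar> powr p) \<le> (SUP m. ennreal (\<bar>G q1 S2 m t\<bar> powr p))"
    proof (intro exI allI impI)
      fix m :: nat
      show "ennreal (\<bar>G q1 S2 m t\<bar> powr p) \<le> (SUP m. ennreal (\<bar>G q1 S2 m t\<bar> powr p))"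
        by (rule SUP_upper) simp
    qed
  qed
  have "(\<integral>\<^sup>+t. ennreal (\<bar>ff t\<bar> powr p) \<partial>lebesgue_on I) \<le> (\<integral>\<^sup>+t. (SUP m. ennreal (\<bar>G q1 S2 m t\<bar> powr p)) \<partial>lebesgue_on I)"
    by (rule nn_integral_mono) (use pw in simp)
  also have "\<dots> \<le> ennreal (Mb q1)" by (rule G_sup_int[OF good2 pos2])
  also have "\<dots> < \<infinity>" by simp
  finally have fin: "(\<integral>\<^sup>+t. ennreal (\<bar>ff t\<bar> powr p) \<partial>lebesgue_on I) < \<infinity>" .
  note ff_meas[measurable]
  have "integrable (lebesgue_on I) (\<lambda>t. \<bar>ff t\<bar> powr p)"
  proof (subst integrable_iff_bounded, intro conjI)
    show "(\<lambda>t. \<bar>ff t\<bar> powr p) \<in> borel_measurable (lebesgue_on I)" by measurable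
    show "(\<integral>\<^sup>+t. ennreal (norm (\<bar>ff t\<bar> powr p)) \<partial>lebesgue_on I) < \<infinity>" using fin by simp
  qed
  moreover have "AE t in lebesgue_on I. 0 \<le> ff t" by (rule AE_I2) (simp add: ff_nonneg)
  ultimately show ?thesis using ff_meas unfolding Lp_plus_def by simp
qed

lemma Tq_AE:
  assumes g: "good q' S'"
  shows "AE t in lebesgue_on I. Tq q' S' phi t = Tq q S phi t"
proof -
  have "AE t in lebesgue_on I. (\<lambda>k u. q' k u = q k u \<and> S' k u = S k u) (K t) (H t)"
  proof (rule AE_comp)
    fix k assume k: "k \<in> {1..n}"
    show "AE u in lebesgue_on I. q' k u = q k u \<and> S' k u = S k u"
      using goodD(3,4)[OF g k] by eventually_elim auto
  qed
  then show ?thesis by eventually_elim (simp add: Tq_def)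
qed

lemma fix_AE:
  assumes g: "good q' S'" and fx: "\<forall>t\<in>I. phi t = Tq q' S' phi t"
  shows "AE t in lebesgue_on I. RB_op x n l q S phi t = phi t"
  using Tq_AE[OF g, of phi]
proof (rule AE_mp, intro AE_I2 impI)
  fix t assume "t \<in> space (lebesgue_on I)" "Tq q' S' phi t = Tq q S phi t"
  then show "RB_op x n l q S phi t = phi t" using fx by (simp add: RB_Tq)
qed

lemma node_zero:
  assumes ez: "\<forall>k\<in>{1..n}. q' k (x 0) = 0 \<and> S' k (x 0) = 0"
    and fx: "\<forall>t\<in>I. phi t = Tq q' S' phi t" and i: "i < n"
  shows "phi (x i) = 0"
proof -
  have k: "Suc i \<in> {1..n}" using i by auto
  have xi: "x i \<in> subint x n (Suc i)"
    using x_less[of i "Suc i"] i by (auto simp: subint_def)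
  have K: "K (x i) = Suc i" by (rule K_unique[OF k xi])
  have x0I: "x 0 \<in> I" using x_le[of 0 n] by simp
  have "l (Suc i) (x 0) = x i" using l_ends k by auto
  then have "h (Suc i) (x i) = x 0" using l_facts(6)[OF k x0I] by metis
  then have H: "H (x i) = x 0" by (simp add: H_def K)
  have "x i \<in> I" using subint_I[OF k] xi by blast
  then show ?thesis using fx ez k by (simp add: Tq_def K H)
qed

lemma graph_a:
  assumes ez: "\<forall>k\<in>{1..n}. q' k (x 0) = 0 \<and> S' k (x 0) = 0 \<and> q' k (x n) = 0 \<and> S' k (x n) = 0"
    and fx: "\<forall>t\<in>I. phi t = Tq q' S' phi t"
  shows "graph_on I phi = (\<Union>i\<in>{1..n}. ifs_map (l i) (q' i) (S' i) ` graph_on I phi)"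
proof
  show "graph_on I phi \<subseteq> (\<Union>i\<in>{1..n}. ifs_map (l i) (q' i) (S' i) ` graph_on I phi)"
  proof
    fix z assume "z \<in> graph_on I phi"
    then obtain t where t: "t \<in> I" and z: "z = (t, phi t)" unfolding graph_on_def by blast
    have KH: "K t \<in> {1..n}" "H t \<in> I" using KH_in[OF t] by auto
    have "z = ifs_map (l (K t)) (q' (K t)) (S' (K t)) (H t, phi (H t))"
      using z H_props(2)[OF t] fx t by (simp add: ifs_map_def Tq_def)
    moreover have "(H t, phi (H t)) \<in> graph_on I phi" using KH unfolding graph_on_def by blast
    ultimately show "z \<in> (\<Union>i\<in>{1..n}. ifs_map (l i) (q' i) (S' i) ` graph_on I phi)"
      using KH by blast
  qed
  show "(\<Union>i\<in>{1..n}. ifs_map (l i) (q' i) (S' i) ` graph_on I phi) \<subseteq> graph_on I phi"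
  proof (rule subsetI)
    fix z assume "z \<in> (\<Union>i\<in>{1..n}. ifs_map (l i) (q' i) (S' i) ` graph_on I phi)"
    then obtain i a b where i: "i \<in> {1..n}" and ab: "(a, b) \<in> graph_on I phi"
      and z: "z = ifs_map (l i) (q' i) (S' i) (a, b)" by auto
    then obtain u where u: "u \<in> I" and a: "a = u" and b: "b = phi u" unfolding graph_on_def by blast
    define s where "s = l i u"
    have sJ: "s \<in> J i" unfolding s_def using l_facts(1)[OF i] u by blast
    have sI: "s \<in> I" using J_I[OF i] sJ by blast
    have "phi s = q' i u + S' i u * phi u"
    proof (cases "K s = i")
      case True
      then have "H s = u" unfolding H_def s_def using l_facts(6)[OF i u] by simp
      then show ?thesis using fx sI True by (simp add: Tq_def)
    next
      case False
      then have ns: "s \<notin> subint x n i" using K_unique[OF i] by blast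
      have "i \<noteq> n" using ns sJ by (auto simp: subint_def J_def)
      then have "i < n" using i by auto
      have "s = x i" using ns sJ \<open>i \<noteq> n\<close> by (auto simp: subint_def J_def)
      have "l i (x n) = x i" using l_ends i by auto
      moreover have "x n \<in> I" using x_le[of 0 n] by simp
      ultimately have "u = x n"
        using \<open>s = x i\<close> u l_facts(2)[OF i] unfolding s_def by (metis inj_onD)
      moreover have "phi s = 0" using node_zero[of q' S' phi i] ez fx \<open>i < n\<close> \<open>s = x i\<close> by auto
      ultimately show ?thesis using ez i by simp
    qed
    then have "ifs_map (l i) (q' i) (S' i) (a, b) = (s, phi s)" by (simp add: ifs_map_def a b s_def)
    then show "z \<in> graph_on I phi"
      using sI z unfolding graph_on_def by auto
  qed
qed

lemma graph_b:
  assumes gr: "graph_on I phi = (\<Union>i\<in>{1..n}. ifs_map (l i) (q' i) (S' i) ` graph_on I phi)"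
  shows "\<forall>t\<in>I. phi t = Tq q' S' phi t"
proof
  fix t assume t: "t \<in> I"
  have KH: "K t \<in> {1..n}" "H t \<in> I" using KH_in[OF t] by auto
  have "(H t, phi (H t)) \<in> graph_on I phi" using KH unfolding graph_on_def by blast
  then have "ifs_map (l (K t)) (q' (K t)) (S' (K t)) (H t, phi (H t)) \<in> graph_on I phi"
    using KH gr by blast
  then have "(t, Tq q' S' phi t) \<in> graph_on I phi"
    using H_props(2)[OF t] by (simp add: ifs_map_def Tq_def)
  then show "phi t = Tq q' S' phi t" unfolding graph_on_def by auto
qed

lemma ends2: "\<forall>k\<in>{1..n}. q1 k (x 0) = 0 \<and> S2 k (x 0) = 0 \<and> q1 k (x n) = 0 \<and> S2 k (x n) = 0"
  by (simp add: q1_def S1_def S2_def)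

end

context RBL begin

lemma main:
  shows
    "(\<forall>g. Lp_plus p {x 0 .. x n} g \<longrightarrow> Lp_plus p {x 0 .. x n} (RB_op x n l q S g))
   \<and> (\<exists>c. 0 \<le> c \<and> c < 1 \<and>
        (\<forall>g h. Lp_plus p {x 0 .. x n} g \<longrightarrow> Lp_plus p {x 0 .. x n} h \<longrightarrow>
           d_p p {x 0 .. x n} (RB_op x n l q S g) (RB_op x n l q S h)
             \<le> c * d_p p {x 0 .. x n} g h))
   \<and> (\<exists>fs. Lp_plus p {x 0 .. x n} fs
        \<and> (AE t in lebesgue_on {x 0 .. x n}.
             fs t = (\<Sum>i=1..n. q i (the_inv_into {x 0 .. x n} (l i) t) * indicator (subint x n i) t)
                  + (\<Sum>i=1..n. S i (the_inv_into {x 0 .. x n} (l i) t)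
                               * fs (the_inv_into {x 0 .. x n} (l i) t) * indicator (subint x n i) t))
        \<and> (\<forall>g. Lp_plus p {x 0 .. x n} g \<longrightarrow>
             (AE t in lebesgue_on {x 0 .. x n}. RB_op x n l q S g t = g t) \<longrightarrow>
             (AE t in lebesgue_on {x 0 .. x n}. g t = fs t))
        \<and> (\<exists>q' S' f.
             (\<forall>i\<in>{1..n}. (AE t in lebesgue_on {x 0 .. x n}. q' i t = q i t)
                         \<and> (AE t in lebesgue_on {x 0 .. x n}. S' i t = S i t)
                         \<and> (\<forall>t\<in>{x 0 .. x n}. 0 \<le> q' i t \<and> 0 \<le> S' i t))
           \<and> (AE t in lebesgue_on {x 0 .. x n}. f t = fs t)
           \<and> (\<forall>t\<in>{x 0 .. x n}. 0 \<le> f t)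
           \<and> graph_on {x 0 .. x n} f
               = (\<Union>i\<in>{1..n}. ifs_map (l i) (q' i) (S' i) ` graph_on {x 0 .. x n} f)
           \<and> (\<forall>g. Lp_plus p {x 0 .. x n} g \<longrightarrow> (\<forall>t\<in>{x 0 .. x n}. 0 \<le> g t) \<longrightarrow>
                graph_on {x 0 .. x n} g
                  = (\<Union>i\<in>{1..n}. ifs_map (l i) (q' i) (S' i) ` graph_on {x 0 .. x n} g) \<longrightarrow>
                (AE t in lebesgue_on {x 0 .. x n}. g t = fs t))))"
proof (intro conjI)
  show "\<forall>g. Lp_plus p {x 0 .. x n} g \<longrightarrow> Lp_plus p {x 0 .. x n} (RB_op x n l q S g)"
    using part1 by blast
  show "\<exists>c. 0 \<le> c \<and> c < 1 \<and>
        (\<forall>g h. Lp_plus p {x 0 .. x n} g \<longrightarrow> Lp_plus p {x 0 .. x n} h \<longrightarrow>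
           d_p p {x 0 .. x n} (RB_op x n l q S g) (RB_op x n l q S h)
             \<le> c * d_p p {x 0 .. x n} g h)"
    using cc_nonneg cc_less1 part2 by blast
  have fixAE: "AE t in lebesgue_on I. RB_op x n l q S ff t = ff t"
    by (rule fix_AE[OF good2]) (use ff_eq in blast)
  have uniq: "AE t in lebesgue_on I. g t = ff t"
    if "Lp_plus p I g" "AE t in lebesgue_on I. RB_op x n l q S g t = g t" for g
    by (rule unique_fix[OF that(1) ff_Lp that(2) fixAE])
  show "\<exists>fs. Lp_plus p {x 0 .. x n} fs
        \<and> (AE t in lebesgue_on {x 0 .. x n}.
             fs t = (\<Sum>i=1..n. q i (the_inv_into {x 0 .. x n} (l i) t) * indicator (subint x n i) t)
                  + (\<Sum>i=1..n. S i (the_inv_into {x 0 .. x n} (l i) t)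
                               * fs (the_inv_into {x 0 .. x n} (l i) t) * indicator (subint x n i) t))
        \<and> (\<forall>g. Lp_plus p {x 0 .. x n} g \<longrightarrow>
             (AE t in lebesgue_on {x 0 .. x n}. RB_op x n l q S g t = g t) \<longrightarrow>
             (AE t in lebesgue_on {x 0 .. x n}. g t = fs t))
        \<and> (\<exists>q' S' f.
             (\<forall>i\<in>{1..n}. (AE t in lebesgue_on {x 0 .. x n}. q' i t = q i t)
                         \<and> (AE t in lebesgue_on {x 0 .. x n}. S' i t = S i t)
                         \<and> (\<forall>t\<in>{x 0 .. x n}. 0 \<le> q' i t \<and> 0 \<le> S' i t))
           \<and> (AE t in lebesgue_on {x 0 .. x n}. f t = fs t)
           \<and> (\<forall>t\<in>{x 0 .. x n}. 0 \<le> f t)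
           \<and> graph_on {x 0 .. x n} f
               = (\<Union>i\<in>{1..n}. ifs_map (l i) (q' i) (S' i) ` graph_on {x 0 .. x n} f)
           \<and> (\<forall>g. Lp_plus p {x 0 .. x n} g \<longrightarrow> (\<forall>t\<in>{x 0 .. x n}. 0 \<le> g t) \<longrightarrow>
                graph_on {x 0 .. x n} g
                  = (\<Union>i\<in>{1..n}. ifs_map (l i) (q' i) (S' i) ` graph_on {x 0 .. x n} g) \<longrightarrow>
                (AE t in lebesgue_on {x 0 .. x n}. g t = fs t)))"
  proof (intro exI[of _ ff] conjI allI impI)
    show "Lp_plus p I ff" by (rule ff_Lp)
    show "AE t in lebesgue_on I.
             ff t = (\<Sum>i=1..n. q i (the_inv_into I (l i) t) * indicator (subint x n i) t)
                  + (\<Sum>i=1..n. S i (the_inv_into I (l i) t)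
                               * ff (the_inv_into I (l i) t) * indicator (subint x n i) t)"
      using fixAE by eventually_elim (simp add: RB_op_def)
    show "AE t in lebesgue_on I. g t = ff t"
      if "Lp_plus p I g" "AE t in lebesgue_on I. RB_op x n l q S g t = g t" for g
      using uniq that by blast
    show "\<exists>q' S' f.
             (\<forall>i\<in>{1..n}. (AE t in lebesgue_on I. q' i t = q i t)
                         \<and> (AE t in lebesgue_on I. S' i t = S i t)
                         \<and> (\<forall>t\<in>I. 0 \<le> q' i t \<and> 0 \<le> S' i t))
           \<and> (AE t in lebesgue_on I. f t = ff t)
           \<and> (\<forall>t\<in>I. 0 \<le> f t)
           \<and> graph_on I f
               = (\<Union>i\<in>{1..n}. ifs_map (l i) (q' i) (S' i) ` graph_on I f)
           \<and> (\<forall>g. Lp_plus p I g \<longrightarrow> (\<forall>t\<in>I. 0 \<le> g t) \<longrightarrow>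
                graph_on I g
                  = (\<Union>i\<in>{1..n}. ifs_map (l i) (q' i) (S' i) ` graph_on I g) \<longrightarrow>
                (AE t in lebesgue_on I. g t = ff t))"
    proof -
      have P1: "\<forall>i\<in>{1..n}. (AE t in lebesgue_on I. q1 i t = q i t)
                         \<and> (AE t in lebesgue_on I. S2 i t = S i t)
                         \<and> (\<forall>t\<in>I. 0 \<le> q1 i t \<and> 0 \<le> S2 i t)"
        using goodD(3,4)[OF good2] pos2 unfolding pos_def by blast
      have P2: "AE t in lebesgue_on I. ff t = ff t" by simp
      have P3: "\<forall>t\<in>I. 0 \<le> ff t" using ff_nonneg by blast
      have P4: "graph_on I ff = (\<Union>i\<in>{1..n}. ifs_map (l i) (q1 i) (S2 i) ` graph_on I ff)"
        by (rule graph_a[OF ends2]) (use ff_eq in blast)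
      have P5: "\<forall>g. Lp_plus p I g \<longrightarrow> (\<forall>t\<in>I. 0 \<le> g t) \<longrightarrow>
                graph_on I g = (\<Union>i\<in>{1..n}. ifs_map (l i) (q1 i) (S2 i) ` graph_on I g) \<longrightarrow>
                (AE t in lebesgue_on I. g t = ff t)"
      proof (intro allI impI)
        fix g assume g: "Lp_plus p I g" and "\<forall>t\<in>I. 0 \<le> g t"
          and gr: "graph_on I g = (\<Union>i\<in>{1..n}. ifs_map (l i) (q1 i) (S2 i) ` graph_on I g)"
        have "AE t in lebesgue_on I. RB_op x n l q S g t = g t"
          by (rule fix_AE[OF good2 graph_b[OF gr]])
        then show "AE t in lebesgue_on I. g t = ff t" by (rule uniq[OF g])
      qed
      show ?thesis using P1 P2 P3 P4 P5 by blast
    qed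
  qed
qed

end

theorem theorem5p1:
  fixes n :: nat and x :: "nat \<Rightarrow> real" and p :: real
    and l Dl q S :: "nat \<Rightarrow> real \<Rightarrow> real"
  assumes n: "n \<ge> 1"
    and x0: "0 \<le> x 0"
    and xmono: "\<forall>i<n. x i < x (Suc i)"
    and p: "1 \<le> p"
    and l_homeo: "\<forall>i\<in>{1..n}. \<exists>g. homeomorphism {x 0 .. x n} {x (i - 1) .. x i} (l i) g"
    and l_contr: "\<forall>i\<in>{1..n}. \<exists>C<1. C-lipschitz_on {x 0 .. x n} (l i)"
    and l_ends: "\<forall>i\<in>{1..n}. l i (x 0) = x (i - 1) \<and> l i (x n) = x i"
    and l_deriv: "\<forall>i\<in>{1..n}. (AE t in lebesgue_on {x 0 .. x n}.
                     (l i has_real_derivative Dl i t) (at t within {x 0 .. x n}))"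
    and Dl_Linf: "\<forall>i\<in>{1..n}. Linf_plus {x 0 .. x n} (Dl i)"
    and q_Lp: "\<forall>i\<in>{1..n}. Lp_plus p {x 0 .. x n} (q i)"
    and S_Linf: "\<forall>i\<in>{1..n}. Linf_plus {x 0 .. x n} (S i)"
    and small: "(\<Sum>i=1..n. ess_norm_inf {x 0 .. x n} (\<lambda>t. Dl i t * S i t powr p)) < 1"
  shows
    "(\<forall>g. Lp_plus p {x 0 .. x n} g \<longrightarrow> Lp_plus p {x 0 .. x n} (RB_op x n l q S g))
   \<and> (\<exists>c. 0 \<le> c \<and> c < 1 \<and>
        (\<forall>g h. Lp_plus p {x 0 .. x n} g \<longrightarrow> Lp_plus p {x 0 .. x n} h \<longrightarrow>
           d_p p {x 0 .. x n} (RB_op x n l q S g) (RB_op x n l q S h)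
             \<le> c * d_p p {x 0 .. x n} g h))
   \<and> (\<exists>fs. Lp_plus p {x 0 .. x n} fs
        \<and> (AE t in lebesgue_on {x 0 .. x n}.
             fs t = (\<Sum>i=1..n. q i (the_inv_into {x 0 .. x n} (l i) t) * indicator (subint x n i) t)
                  + (\<Sum>i=1..n. S i (the_inv_into {x 0 .. x n} (l i) t)
                               * fs (the_inv_into {x 0 .. x n} (l i) t) * indicator (subint x n i) t))
        \<and> (\<forall>g. Lp_plus p {x 0 .. x n} g \<longrightarrow>
             (AE t in lebesgue_on {x 0 .. x n}. RB_op x n l q S g t = g t) \<longrightarrow>
             (AE t in lebesgue_on {x 0 .. x n}. g t = fs t))
        \<and> (\<exists>q' S' f.
             (\<forall>i\<in>{1..n}. (AE t in lebesgue_on {x 0 .. x n}. q' i t = q i t)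
                         \<and> (AE t in lebesgue_on {x 0 .. x n}. S' i t = S i t)
                         \<and> (\<forall>t\<in>{x 0 .. x n}. 0 \<le> q' i t \<and> 0 \<le> S' i t))
           \<and> (AE t in lebesgue_on {x 0 .. x n}. f t = fs t)
           \<and> (\<forall>t\<in>{x 0 .. x n}. 0 \<le> f t)
           \<and> graph_on {x 0 .. x n} f
               = (\<Union>i\<in>{1..n}. ifs_map (l i) (q' i) (S' i) ` graph_on {x 0 .. x n} f)
           \<and> (\<forall>g. Lp_plus p {x 0 .. x n} g \<longrightarrow> (\<forall>t\<in>{x 0 .. x n}. 0 \<le> g t) \<longrightarrow>
                graph_on {x 0 .. x n} g
                  = (\<Union>i\<in>{1..n}. ifs_map (l i) (q' i) (S' i) ` graph_on {x 0 .. x n} g) \<longrightarrow>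
                (AE t in lebesgue_on {x 0 .. x n}. g t = fs t))))"
proof -
  interpret R: RBL n x p l Dl q S
    by (unfold_locales) (use assms in auto)
  show ?thesis by (rule R.main)
qed

end
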